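(* Assume the symmetric interference model with types with type partition $\Pi$ whose parts have sizes divisible by $r$, fix $K>0$, and suppose $|f_\pi(u)-f_\pi(u')|\le K\left|\frac a{a+b}-\frac c{c+d}\right|$ for all $\pi\in\Pi$ and $u=(a,b),u'=(c,d)\in\mathcal B_\pi$. Let $T=T_\Pi$. Then $$|\mathbb E_T\hat t_{\mathrm{Neyman}}-\bar t|\le\frac{K|\Pi|}{n},$$ $$\sqrt{\mathbb E_T(\hat t_{\mathrm{Neyman}}-\bar t)^2}\le\frac1{rn}\sum_{v\in V(G)}\frac{4K}{\sqrt{d(v)}}+\frac K{pqn}\sum_{v\in V(G)}\frac{(r-1)|\Pi(v)\cap\mathcal N(v)|}{(|\Pi(v)|-1)\,d(v)}+\frac{\sigma\sqrt{2r}}{\sqrt{pqn}}.$$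
   Context: Let $n,p,q$ be positive integers and $r=p+q$. Let $G$ be a finite simple graph, $|V(G)|=rn$, no isolated vertices; $\mathcal N(v)$, $d(v)$ neighbor set and degree. For each $v$, $x_v,t_v\in\mathbb R$ and $f_v:2^{\mathcal N(v)}\to\mathbb R$ with $f_v(\emptyset)=0$; outcomes $y_v=x_v+\mathbf 1_T(v)t_v+f_v(T\cap\mathcal N(v))$; $\bar t=\frac1{rn}\sum_vt_v$. $\sigma_T(v)=q$ if $v\in T$, $-p$ otherwise; for $|T|=pn$, the Neyman estimator is $\hat t_{\mathrm{Neyman}}=\frac1{pqn}\sum_v\sigma_T(v)y_v$. Symmetric interference model with types: $\Pi$ a partition of $V(G)$, $\Pi(v)$ the part containing $v$, $\mathcal B_\pi=\{(a,b)\in\mathbb Z^2_{\ge0}:a+b=d(v)\text{ for some }v\in\pi\}$, $f_\pi:\mathcal B_\pi\to\mathbb R$, and $f_v(S)=f_{\Pi(v)}(|S|,|\mathcal N(v)\setminus S|)$. $T_\Pi$: independently for each $\pi$, $T_\pi$ uniform among subsets of $\pi$ of size $p|\pi|/r$; $T_\Pi=\bigcup_\pi T_\pi$. $x_\pi,t_\pi$ are the averages of $x_v,t_v$ over $v\in\pi$; $\epsilon_v=x_v-x_{\Pi(v)}+\frac qr(t_v-t_{\Pi(v)})$; $\sigma^2=\frac1{rn}\sum_v\epsilon_v^2$, $\sigma\ge 0$. *)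

theory Defs
  imports Complex_Main "HOL-Library.Disjoint_Sets"
begin

definition simple_graph :: "'a set \<Rightarrow> ('a \<Rightarrow> 'a \<Rightarrow> bool) \<Rightarrow> bool" where
  "simple_graph V E \<longleftrightarrow> finite V \<and> (\<forall>u v. E u v \<longrightarrow> u \<in> V \<and> v \<in> V)
      \<and> (\<forall>u v. E u v \<longrightarrow> E v u) \<and> (\<forall>v. \<not> E v v)"

definition nbhd :: "'a set \<Rightarrow> ('a \<Rightarrow> 'a \<Rightarrow> bool) \<Rightarrow> 'a \<Rightarrow> 'a set" where
  "nbhd V E v = {u \<in> V. E v u}"

definition deg :: "'a set \<Rightarrow> ('a \<Rightarrow> 'a \<Rightarrow> bool) \<Rightarrow> 'a \<Rightarrow> nat" where
  "deg V E v = card (nbhd V E v)"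

definition part_of :: "'a set set \<Rightarrow> 'a \<Rightarrow> 'a set" where
  "part_of P v = (THE \<pi>. \<pi> \<in> P \<and> v \<in> \<pi>)"

definition Bset :: "'a set \<Rightarrow> ('a \<Rightarrow> 'a \<Rightarrow> bool) \<Rightarrow> 'a set \<Rightarrow> (nat \<times> nat) set" where
  "Bset V E \<pi> = {(a, b). \<exists>v\<in>\<pi>. a + b = deg V E v}"

definition outcome :: "'a set \<Rightarrow> ('a \<Rightarrow> 'a \<Rightarrow> bool) \<Rightarrow> 'a set set \<Rightarrow> ('a \<Rightarrow> real) \<Rightarrow> ('a \<Rightarrow> real)
    \<Rightarrow> ('a set \<Rightarrow> nat \<Rightarrow> nat \<Rightarrow> real) \<Rightarrow> 'a set \<Rightarrow> 'a \<Rightarrow> real" where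
  "outcome V E P x t f T v = x v + (if v \<in> T then t v else 0)
      + f (part_of P v) (card (T \<inter> nbhd V E v)) (card (nbhd V E v - T))"

definition sgn_T :: "nat \<Rightarrow> nat \<Rightarrow> 'a set \<Rightarrow> 'a \<Rightarrow> real" where
  "sgn_T p q T v = (if v \<in> T then real q else - real p)"

definition neyman :: "'a set \<Rightarrow> ('a \<Rightarrow> 'a \<Rightarrow> bool) \<Rightarrow> 'a set set \<Rightarrow> nat \<Rightarrow> nat \<Rightarrow> nat
    \<Rightarrow> ('a \<Rightarrow> real) \<Rightarrow> ('a \<Rightarrow> real) \<Rightarrow> ('a set \<Rightarrow> nat \<Rightarrow> nat \<Rightarrow> real) \<Rightarrow> 'a set \<Rightarrow> real" where
  "neyman V E P n p q x t f T =
     (1 / (real p * real q * real n)) * (\<Sum>v\<in>V. sgn_T p q T v * outcome V E P x t f T v)"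

(* T_Pi is the uniform distribution on this finite set (the independent product
   of uniform choices in each part is exactly uniform on this product set). *)
definition stratified_designs :: "'a set \<Rightarrow> 'a set set \<Rightarrow> nat \<Rightarrow> nat \<Rightarrow> 'a set set" where
  "stratified_designs V P p r =
     {T. T \<subseteq> V \<and> (\<forall>\<pi>\<in>P. r * card (T \<inter> \<pi>) = p * card \<pi>)}"

definition E_T :: "'a set \<Rightarrow> 'a set set \<Rightarrow> nat \<Rightarrow> nat \<Rightarrow> ('a set \<Rightarrow> real) \<Rightarrow> real" where
  "E_T V P p r g = (\<Sum>T\<in>stratified_designs V P p r. g T) / real (card (stratified_designs V P p r))"

definition avg_on :: "'a set \<Rightarrow> ('a \<Rightarrow> real) \<Rightarrow> real" where
  "avg_on A g = (\<Sum>v\<in>A. g v) / real (card A)"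

end

theory Submission
  imports Defs "HOL-Analysis.L2_Norm"
begin


definition tr :: "'a \<Rightarrow> 'a \<Rightarrow> 'a \<Rightarrow> 'a" where
  "tr a b x = (if x = a then b else if x = b then a else x)"
definition sw :: "'a \<Rightarrow> 'a \<Rightarrow> 'a set \<Rightarrow> 'a set" where
  "sw a b T = tr a b ` T"

lemma tr_tr[simp]: "tr a b (tr a b x) = x" by (simp add: tr_def)
lemma inj_tr: "inj (tr a b)" by (metis injI tr_tr)
lemma mem_sw: "x \<in> sw a b T \<longleftrightarrow> tr a b x \<in> T"
  unfolding sw_def by (metis image_iff tr_tr)
lemma sw_sw[simp]: "sw a b (sw a b T) = T" by (auto simp: mem_sw)
lemma tr_other[simp]: "x \<noteq> a \<Longrightarrow> x \<noteq> b \<Longrightarrow> tr a b x = x" by (simp add: tr_def)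
lemma tr_a[simp]: "tr a b a = b" by (simp add: tr_def)
lemma tr_b[simp]: "tr a b b = a" by (simp add: tr_def)

lemma sgn_sw: "sgn_T p q (sw a b T) y = sgn_T p q T (tr a b y)"
  by (simp add: sgn_T_def mem_sw)

lemma alg: fixes p q d x :: real
  assumes "p \<ge> 1" "q \<ge> 1" "d \<ge> 1" "x \<ge> 0"
  shows "sqrt ((p * q)\<^sup>2 * d + x * ((q - p)\<^sup>2 * p * q)) \<le> 4 * (p * q) * sqrt d + (p + q) * (p + q - 1) * x"
proof -
  define s where "s = sqrt d"
  define R where "R = 4 * (p * q) * s + (p + q) * (p + q - 1) * x"
  have sd: "s \<ge> 1" using assms by (simp add: s_def)
  have sq: "s * s = d" using assms by (simp add: s_def)
  have pq: "p * q \<ge> 1"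
  proof -
    have "1 * 1 \<le> p * q" by (rule mult_mono) (use assms in auto)
    thus ?thesis by simp
  qed
  have r1: "(p + q) * (p + q - 1) \<ge> 0" using assms by simp
  have R0: "R \<ge> 0" unfolding R_def using assms sd pq r1 by simp
  have B0: "(q - p)\<^sup>2 \<le> 8 * ((p + q) * (p + q - 1))"
  proof -
    have e1: "(p + q)\<^sup>2 - (q - p)\<^sup>2 = 4 * (p * q)" by (simp add: power2_eq_square algebra_simps)
    have e2: "8 * ((p + q) * (p + q - 1)) - (p + q)\<^sup>2 = (p + q) * (7 * (p + q) - 8)"
      by (simp add: power2_eq_square algebra_simps)
    have "(p + q) * (7 * (p + q) - 8) \<ge> 0" using assms by (intro mult_nonneg_nonneg) auto
    thus ?thesis using e1 e2 pq by linarith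
  qed
  have B1: "8 * ((p + q) * (p + q - 1)) \<le> 8 * ((p + q) * (p + q - 1)) * s"
    using sd r1 by (simp add: mult_le_cancel_left1)
  have B: "(q - p)\<^sup>2 * (p * q) \<le> 8 * ((p + q) * (p + q - 1)) * s * (p * q)"
    using B0 B1 pq by (intro mult_right_mono) auto
  have E1: "R\<^sup>2 = 16 * ((p * q)\<^sup>2 * d) + 8 * ((p + q) * (p + q - 1)) * s * (p * q) * x + ((p + q) * (p + q - 1) * x)\<^sup>2"
    unfolding R_def power2_eq_square sq[symmetric] by algebra
  have E2: "x * ((q - p)\<^sup>2 * (p * q)) \<le> x * (8 * ((p + q) * (p + q - 1)) * s * (p * q))"
    using mult_left_mono[OF B assms(4)] .
  have E3: "(p * q)\<^sup>2 * d \<ge> 0" using assms by simp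
  have "(p * q)\<^sup>2 * d + x * ((q - p)\<^sup>2 * p * q) \<le> R\<^sup>2"
  proof -
    have a1: "x * ((q - p)\<^sup>2 * p * q) = x * ((q - p)\<^sup>2 * (p * q))" by (simp only: ac_simps)
    have a2: "x * (8 * ((p + q) * (p + q - 1)) * s * (p * q)) = 8 * ((p + q) * (p + q - 1)) * s * (p * q) * x"
      by (simp only: ac_simps)
    have a3: "((p + q) * (p + q - 1) * x)\<^sup>2 \<ge> 0" by simp
    show ?thesis using E1 E2 E3 a1 a2 a3 by linarith
  qed
  hence "sqrt ((p * q)\<^sup>2 * d + x * ((q - p)\<^sup>2 * p * q)) \<le> sqrt (R\<^sup>2)" by (rule real_sqrt_le_mono)
  thus ?thesis using R0 by (simp add: R_def s_def)
qed
lemma L2_sum: "finite I \<Longrightarrow> L2_set (\<lambda>T. \<Sum>v\<in>I. X v T) A \<le> (\<Sum>v\<in>I. L2_set (X v) A)"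
proof (induction I rule: finite_induct)
  case empty thus ?case by (simp add: L2_set_def)
next
  case (insert v I)
  have "L2_set (\<lambda>T. \<Sum>v\<in>insert v I. X v T) A = L2_set (\<lambda>T. X v T + (\<Sum>v\<in>I. X v T)) A"
    using insert by simp
  also have "\<dots> \<le> L2_set (X v) A + L2_set (\<lambda>T. \<Sum>v\<in>I. X v T) A" by (rule L2_set_triangle_ineq)
  also have "\<dots> \<le> L2_set (X v) A + (\<Sum>v\<in>I. L2_set (X v) A)" using insert by simp
  finally show ?case using insert by simp
qed

locale design =
  fixes V :: "'a set" and P :: "'a set set" and p q r :: nat
  assumes finV: "finite V" and part: "partition_on V P" and p_pos: "p > 0" and q_pos: "q > 0"
    and r_def: "r = p + q" and dvd: "\<forall>\<pi>\<in>P. r dvd card \<pi>"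
begin

abbreviation "D \<equiv> stratified_designs V P p r"
abbreviation "sg T v \<equiv> sgn_T p q T v"
abbreviation "NN \<equiv> real (card D)"

lemma finP: "finite P" using finV part finite_elements by blast
lemma part_sub: "\<pi> \<in> P \<Longrightarrow> \<pi> \<subseteq> V" using part partition_onD1 by blast
lemma part_fin: "\<pi> \<in> P \<Longrightarrow> finite \<pi>" using part_sub finV finite_subset by blast
lemma part_ne: "\<pi> \<in> P \<Longrightarrow> \<pi> \<noteq> {}" using part partition_onD3 by blast
lemma part_disj: "\<pi> \<in> P \<Longrightarrow> \<pi>' \<in> P \<Longrightarrow> x \<in> \<pi> \<Longrightarrow> x \<in> \<pi>' \<Longrightarrow> \<pi> = \<pi>'"
  using part partition_onD2 disjointD by blast
lemma part_of_eq: "\<pi> \<in> P \<Longrightarrow> v \<in> \<pi> \<Longrightarrow> part_of P v = \<pi>"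
  unfolding part_of_def by (rule the_equality) (auto dest: part_disj)
lemma part_of_mem: "v \<in> V \<Longrightarrow> part_of P v \<in> P \<and> v \<in> part_of P v"
proof -
  assume "v \<in> V"
  then obtain \<pi> where "\<pi> \<in> P" "v \<in> \<pi>" using part partition_onD1 by blast
  thus ?thesis using part_of_eq by simp
qed
lemma card_part_ge: "\<pi> \<in> P \<Longrightarrow> card \<pi> \<ge> r"
proof -
  assume h: "\<pi> \<in> P"
  have "card \<pi> > 0" using part_fin[OF h] part_ne[OF h] by (simp add: card_gt_0_iff)
  thus ?thesis using dvd h by (simp add: dvd_imp_le)
qed
lemma r_ge2: "r \<ge> 2" using p_pos q_pos r_def by simp

lemma finD: "finite D"
proof -
  have "D \<subseteq> Pow V" by (auto simp: stratified_designs_def)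
  thus ?thesis using finV finite_subset by blast
qed

lemma D_ne: "D \<noteq> {}"
proof -
  have "\<forall>\<pi>\<in>P. \<exists>S. S \<subseteq> \<pi> \<and> r * card S = p * card \<pi>"
  proof
    fix \<pi> assume h: "\<pi> \<in> P"
    obtain k where k: "card \<pi> = r * k" using dvd h by blast
    have "p * k \<le> card \<pi>" using k r_def by simp
    then obtain S where "S \<subseteq> \<pi>" "card S = p * k" using obtain_subset_with_card_n by metis
    thus "\<exists>S. S \<subseteq> \<pi> \<and> r * card S = p * card \<pi>" using k by (intro exI[of _ S]) auto
  qed
  then obtain g where g: "\<And>\<pi>. \<pi> \<in> P \<Longrightarrow> g \<pi> \<subseteq> \<pi> \<and> r * card (g \<pi>) = p * card \<pi>" by metis
  define T where "T = \<Union>(g ` P)"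
  have "T \<in> D"
  proof -
    have "T \<subseteq> V" using g part_sub by (auto simp: T_def)
    moreover have "T \<inter> \<pi> = g \<pi>" if "\<pi> \<in> P" for \<pi>
    proof
      show "T \<inter> \<pi> \<subseteq> g \<pi>" using g that part_disj by (auto simp: T_def) (metis subsetD)
      show "g \<pi> \<subseteq> T \<inter> \<pi>" using g that by (auto simp: T_def)
    qed
    ultimately show ?thesis using g by (auto simp: stratified_designs_def)
  qed
  thus ?thesis by blast
qed

lemma NN_pos: "NN > 0" using finD D_ne by (simp add: card_gt_0_iff)

lemma tr_part: assumes "\<pi>0 \<in> P" "a \<in> \<pi>0" "b \<in> \<pi>0" "\<pi> \<in> P"
  shows "tr a b x \<in> \<pi> \<longleftrightarrow> x \<in> \<pi>"
  using assms part_disj unfolding tr_def by (cases "x = a"; cases "x = b") auto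

lemma sw_D: assumes "\<pi>0 \<in> P" "a \<in> \<pi>0" "b \<in> \<pi>0" "T \<in> D" shows "sw a b T \<in> D"
proof -
  have sub: "T \<subseteq> V" and c: "\<And>\<pi>. \<pi> \<in> P \<Longrightarrow> r * card (T \<inter> \<pi>) = p * card \<pi>"
    using assms(4) by (auto simp: stratified_designs_def)
  have "sw a b T \<subseteq> V" using sub assms(1-3) part_sub unfolding sw_def tr_def by auto
  moreover have "r * card (sw a b T \<inter> \<pi>) = p * card \<pi>" if "\<pi> \<in> P" for \<pi>
  proof -
    have "sw a b T \<inter> \<pi> = tr a b ` (T \<inter> \<pi>)"
      using tr_part[OF assms(1-3) that] unfolding sw_def by auto
    hence "card (sw a b T \<inter> \<pi>) = card (T \<inter> \<pi>)"
      using inj_tr by (metis card_image inj_on_subset subset_UNIV)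
    thus ?thesis using c that by simp
  qed
  ultimately show ?thesis by (simp add: stratified_designs_def)
qed

lemma sum_swap: assumes "\<pi>0 \<in> P" "a \<in> \<pi>0" "b \<in> \<pi>0"
  shows "(\<Sum>T\<in>D. h T) = (\<Sum>T\<in>D. h (sw a b T))"
  by (rule sum.reindex_bij_witness[of D "sw a b" "sw a b"]) (auto intro: sw_D[OF assms])

lemma sg_part_sum: assumes "T \<in> D" "\<pi> \<in> P" shows "(\<Sum>v\<in>\<pi>. sg T v) = 0"
proof -
  have c: "r * card (T \<inter> \<pi>) = p * card \<pi>" using assms by (auto simp: stratified_designs_def)
  have fin: "finite \<pi>" using part_fin assms by simp
  have cd: "card (\<pi> - T) = card \<pi> - card (T \<inter> \<pi>)"
    using fin by (metis card_Diff_subset_Int Diff_Int2 Int_commute Int_lower2 card_Diff_subset finite_Int)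
  have le: "card (T \<inter> \<pi>) \<le> card \<pi>" using fin by (simp add: card_mono)
  have "(\<Sum>v\<in>\<pi>. sg T v) = (\<Sum>v\<in>\<pi> \<inter> T. real q) + (\<Sum>v\<in>\<pi> - T. - real p)"
    using fin by (simp add: sgn_T_def sum.If_cases Diff_eq)
  also have "\<dots> = real q * card (T \<inter> \<pi>) - real p * (card \<pi> - card (T \<inter> \<pi>))"
    by (simp add: Int_commute cd)
  also have "\<dots> = real r * card (T \<inter> \<pi>) - real p * card \<pi>"
    using le r_def by (simp add: of_nat_diff algebra_simps)
  also have "\<dots> = 0" using c by (metis diff_self of_nat_mult)
  finally show ?thesis .
qed

lemma zero_sum:
  assumes pi: "\<pi> \<in> P" and F: "F \<subseteq> \<pi>" and w: "w \<in> \<pi> - F"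
    and inv: "\<And>a b T. a \<in> \<pi> - F \<Longrightarrow> b \<in> \<pi> - F \<Longrightarrow> T \<in> D \<Longrightarrow> g (sw a b T) = g T"
  shows "real (card (\<pi> - F)) * (\<Sum>T\<in>D. sg T w * g T) = - (\<Sum>T\<in>D. g T * (\<Sum>x\<in>F. sg T x))"
proof -
  have fin: "finite \<pi>" using part_fin pi by simp
  have eq: "(\<Sum>T\<in>D. sg T w * g T) = (\<Sum>T\<in>D. sg T w' * g T)" if w': "w' \<in> \<pi> - F" for w'
  proof -
    have "(\<Sum>T\<in>D. sg T w * g T) = (\<Sum>T\<in>D. sg (sw w w' T) w * g (sw w w' T))"
      using sum_swap[OF pi, of w w'] w w' by blast
    also have "\<dots> = (\<Sum>T\<in>D. sg T w' * g T)"
      by (rule sum.cong) (use inv w w' in \<open>auto simp: sgn_sw\<close>)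
    finally show ?thesis .
  qed
  have "real (card (\<pi> - F)) * (\<Sum>T\<in>D. sg T w * g T) = (\<Sum>w'\<in>\<pi> - F. \<Sum>T\<in>D. sg T w' * g T)"
  proof -
    have "(\<Sum>w'\<in>\<pi> - F. \<Sum>T\<in>D. sg T w' * g T) = (\<Sum>w'\<in>\<pi> - F. \<Sum>T\<in>D. sg T w * g T)"
      by (rule sum.cong) (simp_all add: eq)
    thus ?thesis by simp
  qed
  also have "\<dots> = (\<Sum>T\<in>D. g T * (\<Sum>w'\<in>\<pi> - F. sg T w'))"
    by (subst sum.swap) (simp add: sum_distrib_left mult.commute)
  also have "\<dots> = (\<Sum>T\<in>D. g T * (- (\<Sum>x\<in>F. sg T x)))"
  proof (rule sum.cong[OF refl])
    fix T assume T: "T \<in> D"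
    have "(\<Sum>w'\<in>\<pi> - F. sg T w') = (\<Sum>w'\<in>\<pi>. sg T w') - (\<Sum>x\<in>F. sg T x)"
      using fin F by (simp add: sum_diff)
    thus "g T * (\<Sum>w'\<in>\<pi> - F. sg T w') = g T * (- (\<Sum>x\<in>F. sg T x))"
      using sg_part_sum[OF T pi] by simp
  qed
  also have "\<dots> = - (\<Sum>T\<in>D. g T * (\<Sum>x\<in>F. sg T x))"
    by (simp add: sum_negf)
  finally show ?thesis .
qed

lemma zero_sum0:
  assumes pi: "\<pi> \<in> P" and w: "w \<in> \<pi>"
    and inv: "\<And>a b T. a \<in> \<pi> \<Longrightarrow> b \<in> \<pi> \<Longrightarrow> T \<in> D \<Longrightarrow> g (sw a b T) = g T"
  shows "(\<Sum>T\<in>D. sg T w * g T) = 0"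
proof -
  have "real (card (\<pi> - {})) * (\<Sum>T\<in>D. sg T w * g T) = - (\<Sum>T\<in>D. g T * (\<Sum>x\<in>{}. sg T x))"
    by (rule zero_sum[OF pi]) (use w inv in auto)
  moreover have "card \<pi> > 0" using part_fin[OF pi] w by (auto simp: card_gt_0_iff)
  ultimately show ?thesis by simp
qed

lemma sg_sq: "(sg T u)\<^sup>2 = real p * real q + (real q - real p) * sg T u"
  by (simp add: sgn_T_def power2_eq_square algebra_simps)

lemma sg_other: "\<pi> \<in> P \<Longrightarrow> a \<in> \<pi> \<Longrightarrow> b \<in> \<pi> \<Longrightarrow> u \<notin> \<pi> \<Longrightarrow> sg (sw a b T) u = sg T u"
  by (simp add: sgn_sw) (metis tr_other)

lemma M1: assumes "u \<in> V" shows "(\<Sum>T\<in>D. sg T u) = 0"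
  using zero_sum0[of "part_of P u" u "\<lambda>T. 1"] part_of_mem[OF assms] by simp

lemma M2: "(\<Sum>T\<in>D. (sg T u)\<^sup>2) = real p * real q * NN + (real q - real p) * (\<Sum>T\<in>D. sg T u)"
  by (simp add: sg_sq sum.distrib sum_distrib_left)

lemma M2': assumes "u \<in> V" shows "(\<Sum>T\<in>D. (sg T u)\<^sup>2) = real p * real q * NN"
  using M2 M1[OF assms] by simp

lemma M3b: assumes "w \<in> V" "u \<notin> part_of P w"
  shows "(\<Sum>T\<in>D. sg T w * sg T u) = 0"
  using part_of_mem[OF assms(1)] assms(2)
  by (intro zero_sum0[of "part_of P w"]) (auto simp: sg_other)

lemma M3a: assumes pi: "\<pi> \<in> P" and "u \<in> \<pi>" "w \<in> \<pi>" "u \<noteq> w"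
  shows "(\<Sum>T\<in>D. sg T w * sg T u) = - real p * real q * NN / (real (card \<pi>) - 1)"
proof -
  have "real (card (\<pi> - {u})) * (\<Sum>T\<in>D. sg T w * sg T u) = - (\<Sum>T\<in>D. sg T u * (\<Sum>x\<in>{u}. sg T x))"
    by (rule zero_sum[OF pi]) (use assms in \<open>auto simp: sgn_sw\<close>)
  hence "(real (card \<pi>) - 1) * (\<Sum>T\<in>D. sg T w * sg T u) = - real p * real q * NN"
  proof -
    assume that: "real (card (\<pi> - {u})) * (\<Sum>T\<in>D. sg T w * sg T u) = - (\<Sum>T\<in>D. sg T u * (\<Sum>x\<in>{u}. sg T x))"
    have "card \<pi> \<ge> 1" using card_part_ge[OF pi] r_ge2 by linarith
    hence "real (card (\<pi> - {u})) = real (card \<pi>) - 1" using assms part_fin[OF pi] by (simp add: of_nat_diff)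
    thus ?thesis using that M2'[of u] part_sub[OF pi] assms by (auto simp: power2_eq_square)
  qed
  moreover have "real (card \<pi>) - 1 > 0" using card_part_ge[OF pi] r_ge2 by linarith
  ultimately show ?thesis by (simp add: field_simps)
qed

lemma M5: assumes pi: "\<pi> \<in> P" and "u \<in> \<pi>" "v \<in> \<pi>" "w \<in> \<pi>" "u \<noteq> v" "u \<noteq> w" "v \<noteq> w"
  shows "(real (card \<pi>) - 2) * (\<Sum>T\<in>D. sg T w * (sg T u * sg T v))
         = 2 * (real q - real p) * real p * real q * NN / (real (card \<pi>) - 1)"
proof -
  have "real (card (\<pi> - {u, v})) * (\<Sum>T\<in>D. sg T w * (sg T u * sg T v))
      = - (\<Sum>T\<in>D. (sg T u * sg T v) * (\<Sum>x\<in>{u, v}. sg T x))"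
    by (rule zero_sum[OF pi]) (use assms in \<open>auto simp: sgn_sw\<close>)
  also have "\<dots> = - (\<Sum>T\<in>D. (sg T u)\<^sup>2 * sg T v + sg T u * (sg T v)\<^sup>2)"
    using assms by (simp add: power2_eq_square algebra_simps)
  also have "\<dots> = - (\<Sum>T\<in>D. real p * real q * sg T v + real p * real q * sg T u
       + 2 * (real q - real p) * (sg T v * sg T u))"
    by (simp add: sg_sq algebra_simps)
  also have "\<dots> = - (2 * (real q - real p) * (\<Sum>T\<in>D. sg T v * sg T u))"
    using M1[of u] M1[of v] part_sub[OF pi] assms
    by (simp add: sum.distrib sum_distrib_left[symmetric] subset_iff)
  also have "\<dots> = 2 * (real q - real p) * real p * real q * NN / (real (card \<pi>) - 1)"
    using M3a[OF pi, of u v] assms by simp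
  moreover have "real (card (\<pi> - {u, v})) = real (card \<pi>) - 2"
  proof -
    have "card (\<pi> - {u, v}) = card \<pi> - 2" using assms part_fin[OF pi] by (simp add: card_Diff_subset)
    moreover have "card \<pi> \<ge> 2" using card_part_ge[OF pi] r_ge2 by linarith
    ultimately show ?thesis by (simp add: of_nat_diff)
  qed
  ultimately show ?thesis by simp
qed

lemma pair_le0: assumes "u \<in> V" "w \<in> V" "u \<noteq> w"
  shows "(\<Sum>T\<in>D. sg T u * sg T w) \<le> 0"
proof (cases "w \<in> part_of P u")
  case True
  have pi: "part_of P u \<in> P" "u \<in> part_of P u" using part_of_mem assms by auto
  have "real (card (part_of P u)) - 1 > 0" using card_part_ge[OF pi(1)] r_ge2 by linarith
  thus ?thesis using M3a[OF pi(1) True pi(2)] assms NN_pos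
    by (simp add: divide_nonpos_pos)
next
  case False
  thus ?thesis using M3b[OF assms(1) False] by simp
qed

lemma S2: assumes Nb: "Nb \<subseteq> V"
  shows "(\<Sum>T\<in>D. (\<Sum>u\<in>Nb. sg T u)\<^sup>2) \<le> real (card Nb) * (real p * real q * NN)"
proof -
  have finNb: "finite Nb" using Nb finV finite_subset by blast
  have "(\<Sum>T\<in>D. (\<Sum>u\<in>Nb. sg T u)\<^sup>2) = (\<Sum>T\<in>D. \<Sum>u\<in>Nb. \<Sum>w\<in>Nb. sg T u * sg T w)"
    by (simp add: power2_eq_square sum_product)
  also have "\<dots> = (\<Sum>u\<in>Nb. \<Sum>w\<in>Nb. \<Sum>T\<in>D. sg T u * sg T w)"
    by (subst sum.swap) (simp add: sum.swap[of _ D])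
  also have "\<dots> \<le> (\<Sum>u\<in>Nb. real p * real q * NN)"
  proof (rule sum_mono)
    fix u assume u: "u \<in> Nb"
    have "(\<Sum>w\<in>Nb. \<Sum>T\<in>D. sg T u * sg T w) = (\<Sum>T\<in>D. sg T u * sg T u) + (\<Sum>w\<in>Nb - {u}. \<Sum>T\<in>D. sg T u * sg T w)"
      using finNb u by (simp add: sum.remove)
    also have "(\<Sum>T\<in>D. sg T u * sg T u) = real p * real q * NN"
      using M2'[of u] u Nb by (auto simp: power2_eq_square)
    also have "(\<Sum>w\<in>Nb - {u}. \<Sum>T\<in>D. sg T u * sg T w) \<le> 0"
      by (rule sum_nonpos) (use pair_le0 u Nb in auto)
    finally show "(\<Sum>w\<in>Nb. \<Sum>T\<in>D. sg T u * sg T w) \<le> real p * real q * NN" by simp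
  qed
  also have "\<dots> = real (card Nb) * (real p * real q * NN)" by simp
  finally show ?thesis .
qed

lemma trip_zero1: assumes v: "v \<in> V" and u: "u \<in> V" "u \<notin> part_of P v" and w: "w \<in> V"
  shows "(\<Sum>T\<in>D. sg T v * (sg T u * sg T w)) = 0"
proof (cases "w \<in> part_of P v")
  case False
  thus ?thesis using part_of_mem[OF v] u
    by (intro zero_sum0[of "part_of P v"]) (auto simp: sg_other)
next
  case True
  have pu: "part_of P u \<in> P" "u \<in> part_of P u" using part_of_mem u by auto
  have ne: "part_of P u \<noteq> part_of P v" using pu u by auto
  have vn: "v \<notin> part_of P u" "w \<notin> part_of P u"
    using part_disj[OF pu(1) _ _ ] part_of_mem[OF v] ne True by metis+
  have "(\<Sum>T\<in>D. sg T u * (sg T v * sg T w)) = 0"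
    using pu vn by (intro zero_sum0[of "part_of P u"]) (auto simp: sg_other)
  thus ?thesis by (simp add: algebra_simps)
qed

lemma trip_zero2: assumes v: "v \<in> V" and u: "u \<in> part_of P v" and w: "w \<in> V" "w \<notin> part_of P v"
  shows "(\<Sum>T\<in>D. sg T v * (sg T u * sg T w)) = 0"
proof -
  have pw: "part_of P w \<in> P" "w \<in> part_of P w" using part_of_mem w by auto
  have ne: "part_of P w \<noteq> part_of P v" using pw w by auto
  have vn: "v \<notin> part_of P w" "u \<notin> part_of P w"
    using part_disj[OF pw(1) _ _ ] part_of_mem[OF v] ne u by metis+
  have "(\<Sum>T\<in>D. sg T w * (sg T v * sg T u)) = 0"
    using pw vn by (intro zero_sum0[of "part_of P w"]) (auto simp: sg_other)
  thus ?thesis by (simp add: algebra_simps)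
qed

lemma S3: assumes Nb: "Nb \<subseteq> V" and v: "v \<in> V" "v \<notin> Nb"
  shows "(real q - real p) * (\<Sum>T\<in>D. sg T v * (\<Sum>u\<in>Nb. sg T u)\<^sup>2)
     \<le> real (card (Nb \<inter> part_of P v)) * ((real q - real p)\<^sup>2 * real p * real q * NN / (real (card (part_of P v)) - 1))"
proof -
  define \<pi> where "\<pi> = part_of P v"
  define m where "m = real (card \<pi>)"
  define X where "X = (real q - real p)\<^sup>2 * real p * real q * NN / (m - 1)"
  have pi: "\<pi> \<in> P" "v \<in> \<pi>" using part_of_mem[OF v(1)] by (auto simp: \<pi>_def)
  have m1: "m - 1 > 0" using card_part_ge[OF pi(1)] r_ge2 unfolding m_def by linarith
  have X0: "X \<ge> 0" unfolding X_def using m1 NN_pos by simp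
  have finNb: "finite Nb" using Nb finV finite_subset by blast
  have finpi: "finite \<pi>" using part_fin pi by simp
  define t where "t u w = (\<Sum>T\<in>D. sg T v * (sg T u * sg T w))" for u w
  have "(real q - real p) * (\<Sum>T\<in>D. sg T v * (\<Sum>u\<in>Nb. sg T u)\<^sup>2)
       = (\<Sum>u\<in>Nb. \<Sum>w\<in>Nb. (real q - real p) * t u w)"
  proof -
    have "(\<Sum>T\<in>D. sg T v * (\<Sum>u\<in>Nb. sg T u)\<^sup>2) = (\<Sum>T\<in>D. \<Sum>u\<in>Nb. \<Sum>w\<in>Nb. sg T v * (sg T u * sg T w))"
    proof (rule sum.cong[OF refl])
      fix T
      have "(\<Sum>u\<in>Nb. sg T u)\<^sup>2 = (\<Sum>u\<in>Nb. \<Sum>w\<in>Nb. sg T u * sg T w)"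
        by (simp only: power2_eq_square sum_product)
      thus "sg T v * (\<Sum>u\<in>Nb. sg T u)\<^sup>2 = (\<Sum>u\<in>Nb. \<Sum>w\<in>Nb. sg T v * (sg T u * sg T w))"
        by (simp add: sum_distrib_left)
    qed
    also have "\<dots> = (\<Sum>u\<in>Nb. \<Sum>w\<in>Nb. t u w)"
      unfolding t_def by (subst sum.swap) (simp add: sum.swap[of _ D])
    finally show ?thesis by (simp add: sum_distrib_left)
  qed
  also have "\<dots> \<le> (\<Sum>u\<in>Nb. if u \<in> \<pi> then X else 0)"
  proof (rule sum_mono)
    fix u assume u: "u \<in> Nb"
    have uV: "u \<in> V" using u Nb by auto
    have uv: "u \<noteq> v" using u v by auto
    show "(\<Sum>w\<in>Nb. (real q - real p) * t u w) \<le> (if u \<in> \<pi> then X else 0)"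
    proof (cases "u \<in> \<pi>")
      case False
      have "(\<Sum>w\<in>Nb. (real q - real p) * t u w) = 0"
        by (rule sum.neutral) (use trip_zero1[OF v(1) uV] False Nb in \<open>auto simp: t_def \<pi>_def\<close>)
      thus ?thesis using False by simp
    next
      case True
      have tuu: "(real q - real p) * t u u = - X"
      proof -
        have "t u u = (\<Sum>T\<in>D. real p * real q * sg T v + (real q - real p) * (sg T v * sg T u))"
          unfolding t_def
        proof (rule sum.cong[OF refl])
          fix T
          have "sg T u * sg T u = real p * real q + (real q - real p) * sg T u"
            using sg_sq[of T u] by (simp add: power2_eq_square)
          thus "sg T v * (sg T u * sg T u) = real p * real q * sg T v + (real q - real p) * (sg T v * sg T u)"
            by (subst \<open>sg T u * sg T u = _\<close>) (simp add: algebra_simps)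
        qed
        also have "\<dots> = (real q - real p) * (\<Sum>T\<in>D. sg T v * sg T u)"
          using M1[OF v(1)] by (simp add: sum.distrib sum_distrib_left[symmetric])
        also have "\<dots> = (real q - real p) * (- real p * real q * NN / (m - 1))"
          using M3a[OF pi(1) True pi(2) uv] by (simp add: m_def)
        finally show ?thesis by (simp add: X_def power2_eq_square)
      qed
      have tuw: "(real q - real p) * t u w = (if w \<in> \<pi> then 2 * X / (m - 2) else 0)"
        if w: "w \<in> Nb - {u}" for w
      proof (cases "w \<in> \<pi>")
        case False
        thus ?thesis using trip_zero2[OF v(1), of u w] True w Nb by (auto simp: t_def \<pi>_def)
      next
        case wp: True
        have wv: "w \<noteq> v" using w v by auto
        have "card {u, v, w} \<le> card \<pi>" using True wp pi finpi by (intro card_mono) auto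
        moreover have "card {u, v, w} = 3" using uv wv w by auto
        ultimately have m3: "m - 2 > 0" unfolding m_def by linarith
        have "(m - 2) * t u w = 2 * (real q - real p) * real p * real q * NN / (m - 1)"
          using M5[OF pi(1) True wp pi(2)] uv wv w unfolding t_def m_def by auto
        hence "t u w = 2 * (real q - real p) * real p * real q * NN / ((m - 1) * (m - 2))"
        proof -
          assume h: "(m - 2) * t u w = 2 * (real q - real p) * real p * real q * NN / (m - 1)"
          have "t u w = ((m - 2) * t u w) / (m - 2)" using m3 by simp
          also have "\<dots> = 2 * (real q - real p) * real p * real q * NN / (m - 1) / (m - 2)" using h by simp
          finally show ?thesis by simp
        qed
        thus ?thesis using wp m3 m1 by (simp add: X_def power2_eq_square field_simps)
      qed
      have "(\<Sum>w\<in>Nb. (real q - real p) * t u w) = - X + (\<Sum>w\<in>Nb - {u}. (if w \<in> \<pi> then 2 * X / (m - 2) else 0))"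
        using finNb u tuu tuw by (simp add: sum.remove)
      also have "(\<Sum>w\<in>Nb - {u}. (if w \<in> \<pi> then 2 * X / (m - 2) else 0)) = real (card ((Nb - {u}) \<inter> \<pi>)) * (2 * X / (m - 2))"
        using finNb by (simp add: sum.inter_restrict[symmetric])
      also have "\<dots> \<le> 2 * X"
      proof (cases "(Nb - {u}) \<inter> \<pi> = {}")
        case True thus ?thesis using X0 by simp
      next
        case False
        have sub: "(Nb - {u}) \<inter> \<pi> \<subseteq> \<pi> - {u, v}" using v by auto
        have "card ((Nb - {u}) \<inter> \<pi>) \<le> card (\<pi> - {u, v})" using sub finpi by (intro card_mono) auto
        also have "card (\<pi> - {u, v}) = card \<pi> - 2" using True pi uv finpi by (simp add: card_Diff_subset)
        finally have c1: "real (card ((Nb - {u}) \<inter> \<pi>)) \<le> m - 2"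
          using card_part_ge[OF pi(1)] r_ge2 unfolding m_def by linarith
        have c0: "card ((Nb - {u}) \<inter> \<pi>) > 0" using False finNb by (simp add: card_gt_0_iff)
        hence m2: "m - 2 > 0" using c1 by linarith
        have "real (card ((Nb - {u}) \<inter> \<pi>)) * (2 * X / (m - 2)) \<le> (m - 2) * (2 * X / (m - 2))"
          using c1 X0 m2 by (intro mult_right_mono) auto
        thus ?thesis using m2 by simp
      qed
      finally show ?thesis using True by simp
    qed
  qed
  also have "\<dots> = real (card (Nb \<inter> \<pi>)) * X"
    using finNb by (simp add: sum.inter_restrict[symmetric])
  finally show ?thesis by (simp add: X_def m_def \<pi>_def)
qed

lemma var_v: assumes Nb: "Nb \<subseteq> V" and v: "v \<in> V" "v \<notin> Nb"
  shows "(\<Sum>T\<in>D. (sg T v)\<^sup>2 * (\<Sum>u\<in>Nb. sg T u)\<^sup>2)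
     \<le> (real p * real q)\<^sup>2 * real (card Nb) * NN
       + real (card (Nb \<inter> part_of P v)) * ((real q - real p)\<^sup>2 * real p * real q * NN / (real (card (part_of P v)) - 1))"
proof -
  have "(\<Sum>T\<in>D. (sg T v)\<^sup>2 * (\<Sum>u\<in>Nb. sg T u)\<^sup>2)
      = real p * real q * (\<Sum>T\<in>D. (\<Sum>u\<in>Nb. sg T u)\<^sup>2) + (real q - real p) * (\<Sum>T\<in>D. sg T v * (\<Sum>u\<in>Nb. sg T u)\<^sup>2)"
  proof -
    have "(\<Sum>T\<in>D. (sg T v)\<^sup>2 * (\<Sum>u\<in>Nb. sg T u)\<^sup>2)
       = (\<Sum>T\<in>D. real p * real q * (\<Sum>u\<in>Nb. sg T u)\<^sup>2 + (real q - real p) * (sg T v * (\<Sum>u\<in>Nb. sg T u)\<^sup>2))"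
      by (rule sum.cong[OF refl]) (simp only: sg_sq ring_distribs mult.assoc)
    thus ?thesis by (simp only: sum.distrib sum_distrib_left)
  qed
  also have "\<dots> \<le> real p * real q * (real (card Nb) * (real p * real q * NN))
     + real (card (Nb \<inter> part_of P v)) * ((real q - real p)\<^sup>2 * real p * real q * NN / (real (card (part_of P v)) - 1))"
    using S2[OF Nb] S3[OF Nb v] by (intro add_mono mult_left_mono) auto
  finally show ?thesis by (simp add: power2_eq_square algebra_simps)
qed

lemma sum_sg_card: "finite A \<Longrightarrow> (\<Sum>u\<in>A. sg T u) = real r * real (card (T \<inter> A)) - real p * real (card A)"
proof -
  assume fA: "finite A"
  have "(\<Sum>u\<in>A. sg T u) = (\<Sum>u\<in>A. real r * (if u \<in> T then 1 else 0) - real p)"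
    by (rule sum.cong) (auto simp: sgn_T_def r_def)
  also have "\<dots> = real r * real (card (T \<inter> A)) - real p * real (card A)"
    using fA by (simp add: sum_subtractf sum_distrib_left[symmetric] sum.If_cases Int_commute)
  finally show ?thesis .
qed

lemma ind_sum: assumes pi: "\<pi> \<in> P" and u: "u \<in> \<pi>" and v: "v \<in> \<pi>" and uv: "u \<noteq> v"
  shows "(\<Sum>T\<in>D. real q * (if u \<in> T \<and> v \<notin> T then 1 else 0) + real p * (if v \<in> T \<and> u \<notin> T then 1 else 0))
       = NN * (real p * real q) * real (card \<pi>) / (real r * (real (card \<pi>) - 1))"
proof -
  have rp: "real r > 0" using r_ge2 by simp
  have pw: "real q * (if u \<in> T \<and> v \<notin> T then 1 else 0) + real p * (if v \<in> T \<and> u \<notin> T then 1 else 0)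
     = ((real q * real q - real p * real p) * sg T u - real r * (sg T u * sg T v) + real p * real q * real r) / (real r)\<^sup>2" for T
  proof -
    have "(real r)\<^sup>2 * (real q * (if u \<in> T \<and> v \<notin> T then 1 else 0) + real p * (if v \<in> T \<and> u \<notin> T then 1 else 0))
     = ((real q * real q - real p * real p) * sg T u - real r * (sg T u * sg T v) + real p * real q * real r)"
      by (cases "u \<in> T"; cases "v \<in> T") (auto simp: sgn_T_def r_def algebra_simps power2_eq_square)
    thus ?thesis using rp by (simp add: eq_divide_eq mult.commute)
  qed
  have uV: "u \<in> V" and vV: "v \<in> V" using u v pi part_sub by auto
  have m1: "real (card \<pi>) - 1 > 0" using card_part_ge[OF pi] r_ge2 by linarith
  have "(\<Sum>T\<in>D. real q * (if u \<in> T \<and> v \<notin> T then 1 else 0) + real p * (if v \<in> T \<and> u \<notin> T then 1 else 0))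
      = ((real q * real q - real p * real p) * (\<Sum>T\<in>D. sg T u) - real r * (\<Sum>T\<in>D. sg T u * sg T v) + real p * real q * real r * NN) / (real r)\<^sup>2"
    by (simp only: pw sum_divide_distrib[symmetric] sum.distrib sum_subtractf sum_distrib_left[symmetric]) simp
  also have "\<dots> = (real r * (real p * real q * NN / (real (card \<pi>) - 1)) + real p * real q * real r * NN) / (real r)\<^sup>2"
    using M1[OF uV] M3a[OF pi v u uv[symmetric]] by simp
  also have "\<dots> = NN * (real p * real q) * real (card \<pi>) / (real r * (real (card \<pi>) - 1))"
    using rp m1 by (simp add: field_simps power2_eq_square)
  finally show ?thesis .
qed

end

context design begin

lemma sum_part_zero: assumes T: "T \<in> D" shows "(\<Sum>v\<in>V. sg T v * F (part_of P v)) = 0"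
proof -
  have "(\<Sum>v\<in>V. sg T v * F (part_of P v)) = (\<Sum>\<pi>\<in>P. \<Sum>v\<in>\<pi>. sg T v * F (part_of P v))"
    using sum.partition[OF finV part] .
  also have "\<dots> = (\<Sum>\<pi>\<in>P. F \<pi> * (\<Sum>v\<in>\<pi>. sg T v))"
    by (rule sum.cong[OF refl]) (simp add: sum_distrib_left part_of_eq mult.commute)
  also have "\<dots> = 0" using sg_part_sum[OF T] by simp
  finally show ?thesis .
qed

lemma varL: assumes e: "\<And>\<pi>. \<pi> \<in> P \<Longrightarrow> (\<Sum>v\<in>\<pi>. e v) = 0"
  shows "(\<Sum>T\<in>D. (\<Sum>v\<in>V. sg T v * e v)\<^sup>2) \<le> 2 * (real p * real q * NN) * (\<Sum>v\<in>V. (e v)\<^sup>2)"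
proof -
  define Q where "Q = real p * real q * NN"
  have Q0: "Q \<ge> 0" unfolding Q_def by simp
  have "(\<Sum>T\<in>D. (\<Sum>v\<in>V. sg T v * e v)\<^sup>2) = (\<Sum>T\<in>D. \<Sum>u\<in>V. \<Sum>w\<in>V. e u * e w * (sg T u * sg T w))"
  proof (rule sum.cong[OF refl])
    fix T
    show "(\<Sum>v\<in>V. sg T v * e v)\<^sup>2 = (\<Sum>u\<in>V. \<Sum>w\<in>V. e u * e w * (sg T u * sg T w))"
      by (simp only: power2_eq_square sum_product) (simp add: algebra_simps)
  qed
  also have "\<dots> = (\<Sum>u\<in>V. \<Sum>w\<in>V. e u * e w * (\<Sum>T\<in>D. sg T u * sg T w))"
    by (subst sum.swap) (simp add: sum.swap[of _ D] sum_distrib_left)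
  also have "\<dots> \<le> (\<Sum>u\<in>V. 2 * Q * (e u)\<^sup>2)"
  proof (rule sum_mono)
    fix u assume u: "u \<in> V"
    define \<pi> where "\<pi> = part_of P u"
    define m where "m = real (card \<pi>)"
    have pi: "\<pi> \<in> P" "u \<in> \<pi>" using part_of_mem[OF u] by (auto simp: \<pi>_def)
    have finpi: "finite \<pi>" using part_fin pi by simp
    have m2: "m \<ge> 2" using card_part_ge[OF pi(1)] r_ge2 unfolding m_def by linarith
    have sw: "(\<Sum>T\<in>D. sg T u * sg T w) = (if w \<in> \<pi> then - Q / (m - 1) else 0)" if w: "w \<in> V - {u}" for w
    proof (cases "w \<in> \<pi>")
      case True thus ?thesis using M3a[OF pi(1) _ pi(2), of w] w by (simp add: Q_def m_def mult.commute)
    next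
      case False thus ?thesis using M3b[OF u, of w] w by (simp add: \<pi>_def)
    qed
    have "(\<Sum>w\<in>V. e u * e w * (\<Sum>T\<in>D. sg T u * sg T w))
       = e u * e u * Q + (\<Sum>w\<in>V - {u}. e u * e w * (\<Sum>T\<in>D. sg T u * sg T w))"
      using finV u M2'[OF u] by (simp add: sum.remove power2_eq_square Q_def)
    also have "(\<Sum>w\<in>V - {u}. e u * e w * (\<Sum>T\<in>D. sg T u * sg T w))
        = (\<Sum>w\<in>V - {u}. if w \<in> \<pi> then e u * e w * (- Q / (m - 1)) else 0)"
      by (rule sum.cong) (simp_all add: sw)
    also have "\<dots> = (\<Sum>w\<in>(V - {u}) \<inter> \<pi>. e u * e w * (- Q / (m - 1)))"
      by (rule sum.inter_restrict[symmetric]) (use finV in auto)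
    also have "(V - {u}) \<inter> \<pi> = \<pi> - {u}" using part_sub[OF pi(1)] by auto
    also have "(\<Sum>w\<in>\<pi> - {u}. e u * e w * (- Q / (m - 1))) = e u * (- Q / (m - 1)) * (\<Sum>w\<in>\<pi> - {u}. e w)"
      by (simp only: sum_distrib_left) (simp only: ac_simps)
    also have "(\<Sum>w\<in>\<pi> - {u}. e w) = - e u" using e[OF pi(1)] finpi pi(2) by (simp add: sum_diff1)
    finally have eq: "(\<Sum>w\<in>V. e u * e w * (\<Sum>T\<in>D. sg T u * sg T w)) = (e u)\<^sup>2 * Q * (1 + 1 / (m - 1))"
      using m2 by (simp add: power2_eq_square algebra_simps)
    have "1 / (m - 1) \<le> 1" using m2 by simp
    hence "(e u)\<^sup>2 * Q * (1 + 1 / (m - 1)) \<le> (e u)\<^sup>2 * Q * 2"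
      using Q0 by (intro mult_left_mono) auto
    thus "(\<Sum>w\<in>V. e u * e w * (\<Sum>T\<in>D. sg T u * sg T w)) \<le> 2 * Q * (e u)\<^sup>2"
      using eq by (simp add: algebra_simps)
  qed
  also have "\<dots> = 2 * (real p * real q * NN) * (\<Sum>v\<in>V. (e v)\<^sup>2)" by (simp add: sum_distrib_left Q_def)
  finally show ?thesis .
qed

end

locale setting = design V P p q r for V :: "'a set" and P p q r +
  fixes E :: "'a \<Rightarrow> 'a \<Rightarrow> bool" and n :: nat and x t :: "'a \<Rightarrow> real"
    and f :: "'a set \<Rightarrow> nat \<Rightarrow> nat \<Rightarrow> real" and K :: real
  assumes n_pos: "n > 0" and graph: "simple_graph V E" and card_V: "card V = r * n"
    and no_isolated: "\<forall>v\<in>V. \<exists>u. E v u" and K_pos: "K > 0"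
    and lipschitz: "\<forall>\<pi>\<in>P. \<forall>a b c d. (a, b) \<in> Bset V E \<pi> \<longrightarrow> (c, d) \<in> Bset V E \<pi> \<longrightarrow>
        \<bar>f \<pi> a b - f \<pi> c d\<bar> \<le> K * \<bar>real a / real (a + b) - real c / real (c + d)\<bar>"
begin

abbreviation "Nb v \<equiv> nbhd V E v"
abbreviation "dg v \<equiv> deg V E v"
definition h where "h v T = f (part_of P v) (card (T \<inter> Nb v)) (card (Nb v - T))"

lemma Nb_sub: "Nb v \<subseteq> V" by (auto simp: nbhd_def)
lemma Nb_fin: "finite (Nb v)" using Nb_sub finV finite_subset by blast
lemma Nb_self: "v \<notin> Nb v" using graph by (auto simp: nbhd_def simple_graph_def)
lemma dg_pos: "v \<in> V \<Longrightarrow> dg v \<ge> 1"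
proof -
  assume v: "v \<in> V"
  obtain u where "E v u" using no_isolated v by blast
  hence "u \<in> Nb v" using graph by (auto simp: nbhd_def simple_graph_def)
  thus ?thesis using Nb_fin[of v] by (auto simp: deg_def Suc_le_eq card_gt_0_iff)
qed

lemma Bset_fin: "finite (Bset V E \<pi>)"
proof -
  have "Bset V E \<pi> \<subseteq> {..card V} \<times> {..card V}"
  proof
    fix z assume "z \<in> Bset V E \<pi>"
    then obtain a b w where z: "z = (a, b)" "a + b = dg w" by (auto simp: Bset_def)
    have "dg w \<le> card V" unfolding deg_def using Nb_sub finV by (rule card_mono[rotated])
    thus "z \<in> {..card V} \<times> {..card V}" using z by auto
  qed
  thus ?thesis using finite_subset by blast
qed

lemma c_exists: assumes pi: "\<pi> \<in> P"
  shows "\<exists>c. \<forall>a b. (a, b) \<in> Bset V E \<pi> \<longrightarrow> \<bar>f \<pi> a b - c\<bar> \<le> K * \<bar>real a / real (a + b) - real p / real r\<bar>"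
proof -
  define B where "B = Bset V E \<pi>"
  define \<phi> where "\<phi> z = f \<pi> (fst z) (snd z) + K * \<bar>real (fst z) / real (fst z + snd z) - real p / real r\<bar>" for z
  obtain w where w: "w \<in> \<pi>" using part_ne[OF pi] by blast
  have "(0, dg w) \<in> B" using w unfolding B_def Bset_def by auto
  hence Bne: "B \<noteq> {}" by blast
  have Bfin: "finite B" using Bset_fin B_def by simp
  define c where "c = Min (\<phi> ` B)"
  show ?thesis
  proof (intro exI[of _ c] allI impI)
    fix a b assume ab: "(a, b) \<in> Bset V E \<pi>"
    have "c \<le> \<phi> (a, b)" unfolding c_def using ab Bfin by (simp add: B_def)
    hence lo: "f \<pi> a b - c \<ge> - (K * \<bar>real a / real (a + b) - real p / real r\<bar>)" by (simp add: \<phi>_def)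
    have "c \<in> \<phi> ` B" unfolding c_def using Bne Bfin by (intro Min_in) auto
    then obtain a' b' where ab': "(a', b') \<in> B" "c = \<phi> (a', b')" by auto
    have "f \<pi> a b - f \<pi> a' b' \<le> K * \<bar>real a / real (a + b) - real a' / real (a' + b')\<bar>"
      using lipschitz pi ab ab'(1) unfolding B_def by fastforce
    also have "\<dots> \<le> K * (\<bar>real a / real (a + b) - real p / real r\<bar> + \<bar>real a' / real (a' + b') - real p / real r\<bar>)"
      using K_pos by (intro mult_left_mono) auto
    finally have hi: "f \<pi> a b - c \<le> K * \<bar>real a / real (a + b) - real p / real r\<bar>"
      using ab'(2) by (simp add: \<phi>_def algebra_simps)
    show "\<bar>f \<pi> a b - c\<bar> \<le> K * \<bar>real a / real (a + b) - real p / real r\<bar>" using lo hi by linarith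
  qed
qed

definition cc where "cc \<pi> = (SOME c. \<forall>a b. (a, b) \<in> Bset V E \<pi> \<longrightarrow> \<bar>f \<pi> a b - c\<bar> \<le> K * \<bar>real a / real (a + b) - real p / real r\<bar>)"

lemma cc_prop: "\<pi> \<in> P \<Longrightarrow> (a, b) \<in> Bset V E \<pi> \<Longrightarrow> \<bar>f \<pi> a b - cc \<pi>\<bar> \<le> K * \<bar>real a / real (a + b) - real p / real r\<bar>"
  using someI_ex[OF c_exists] unfolding cc_def by blast

lemma sw_int: assumes "v \<notin> A" "u \<noteq> v"
  shows "sw v u T \<inter> A = (if u \<in> A then (if v \<in> T then insert u (T \<inter> A) else T \<inter> A - {u}) else T \<inter> A)"
  using assms by (auto simp: mem_sw tr_def split: if_splits)
lemma sw_diff: assumes "v \<notin> A" "u \<noteq> v"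
  shows "A - sw v u T = (if u \<in> A then (if v \<in> T then A - T - {u} else insert u (A - T)) else A - T)"
  using assms by (auto simp: mem_sw tr_def split: if_splits)

lemma card_split: "finite A \<Longrightarrow> card (T \<inter> A) + card (A - T) = card A"
  by (metis Int_commute card_Int_Diff)

lemma lip1: assumes v: "v \<in> V" and ab: "a + b = dg v" and a: "a \<ge> 1"
  shows "\<bar>f (part_of P v) (a - 1) (b + 1) - f (part_of P v) a b\<bar> \<le> K / real (dg v)"
proof -
  have pv: "part_of P v \<in> P" "v \<in> part_of P v" using part_of_mem[OF v] by auto
  have m1: "(a - 1, b + 1) \<in> Bset V E (part_of P v)" using ab a pv by (auto simp: Bset_def)
  have m2: "(a, b) \<in> Bset V E (part_of P v)" using ab pv by (auto simp: Bset_def)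
  have s: "a - 1 + (b + 1) = dg v" using ab a by simp
  have d0: "real (dg v) > 0" using dg_pos[OF v] by simp
  have "\<bar>f (part_of P v) (a - 1) (b + 1) - f (part_of P v) a b\<bar>
     \<le> K * \<bar>real (a - 1) / real (a - 1 + (b + 1)) - real a / real (a + b)\<bar>"
    using lipschitz pv(1) m1 m2 by blast
  also have "\<bar>real (a - 1) / real (a - 1 + (b + 1)) - real a / real (a + b)\<bar> = 1 / real (dg v)"
    unfolding s ab using a d0 by (simp add: of_nat_diff diff_divide_distrib[symmetric])
  finally show ?thesis by simp
qed

lemma h_swap: assumes v: "v \<in> V" and u: "u \<in> part_of P v" "u \<noteq> v"
  shows "\<bar>sg T u * (h v (sw v u T) - h v T)\<bar>
     \<le> (if u \<in> Nb v then K / real (dg v) * (real q * (if u \<in> T \<and> v \<notin> T then 1 else 0) + real p * (if v \<in> T \<and> u \<notin> T then 1 else 0)) else 0)"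
proof -
  define A where "A = Nb v"
  define a where "a = card (T \<inter> A)"
  define b where "b = card (A - T)"
  have vA: "v \<notin> A" using Nb_self A_def by simp
  have finA: "finite A" using Nb_fin A_def by simp
  have ab: "a + b = dg v" unfolding a_def b_def A_def deg_def using card_split[OF Nb_fin] .
  have hT: "h v T = f (part_of P v) a b" by (simp add: h_def a_def b_def A_def)
  have I: "sw v u T \<inter> A = (if u \<in> A then (if v \<in> T then insert u (T \<inter> A) else T \<inter> A - {u}) else T \<inter> A)"
    using sw_int[OF vA u(2)] .
  have Df: "A - sw v u T = (if u \<in> A then (if v \<in> T then A - T - {u} else insert u (A - T)) else A - T)"
    using sw_diff[OF vA u(2)] .
  have hS: "h v (sw v u T) = f (part_of P v) (card (sw v u T \<inter> A)) (card (A - sw v u T))"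
    by (simp add: h_def A_def)
  have K0: "K / real (dg v) \<ge> 0" using K_pos by simp
  show ?thesis
  proof (cases "u \<in> A")
    case False
    thus ?thesis using I Df hS hT by (simp add: A_def a_def b_def)
  next
    case uA: True
    show ?thesis
    proof (cases "u \<in> T")
      case uT: True
      show ?thesis
      proof (cases "v \<in> T")
        case True
        have "insert u (T \<inter> A) = T \<inter> A" "A - T - {u} = A - T" using uA uT by auto
        thus ?thesis using I Df hS hT True uA uT K0 by (simp add: A_def a_def b_def)
      next
        case vT: False
        have c1: "card (T \<inter> A - {u}) = a - 1" using uA uT finA by (simp add: a_def)
        have c2: "card (insert u (A - T)) = b + 1" using uT finA by (simp add: b_def)
        have "card (T \<inter> A) > 0" using uA uT finA by (auto simp: card_gt_0_iff)
        hence a1: "a \<ge> 1" by (simp add: a_def)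
        have "h v (sw v u T) = f (part_of P v) (a - 1) (b + 1)" using hS I Df uA vT c1 c2 by simp
        hence "\<bar>h v (sw v u T) - h v T\<bar> \<le> K / real (dg v)" using lip1[OF v ab a1] hT by simp
        moreover have "sg T u = real q" using uT by (simp add: sgn_T_def)
        ultimately have "\<bar>sg T u * (h v (sw v u T) - h v T)\<bar> \<le> real q * (K / real (dg v))"
          by (simp only: abs_mult) (simp add: mult_left_mono del: times_divide_eq_right)
        thus ?thesis using uA uT vT A_def by (simp add: mult.commute)
      qed
    next
      case uT: False
      show ?thesis
      proof (cases "v \<in> T")
        case vT: True
        have c1: "card (insert u (T \<inter> A)) = a + 1" using uT finA by (simp add: a_def)
        have c2: "card (A - T - {u}) = b - 1" using uA uT finA by (simp add: b_def)
        have "card (A - T) > 0" using uA uT finA by (auto simp: card_gt_0_iff)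
        hence b1: "b \<ge> 1" by (simp add: b_def)
        have ab': "(a + 1) + (b - 1) = dg v" using ab b1 by simp
        have "h v (sw v u T) = f (part_of P v) (a + 1) (b - 1)" using hS I Df uA vT c1 c2 by simp
        moreover have "f (part_of P v) (a + 1 - 1) (b - 1 + 1) = f (part_of P v) a b" using b1 by simp
        ultimately have "\<bar>h v (sw v u T) - h v T\<bar> \<le> K / real (dg v)"
          using lip1[OF v ab', of] hT by (simp add: abs_minus_commute)
        moreover have "sg T u = - real p" using uT by (simp add: sgn_T_def)
        ultimately have "\<bar>sg T u * (h v (sw v u T) - h v T)\<bar> \<le> real p * (K / real (dg v))"
          by (simp only: abs_mult) (simp add: mult_left_mono del: times_divide_eq_right)
        thus ?thesis using uA uT vT A_def by (simp add: mult.commute)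
      next
        case False
        have "T \<inter> A - {u} = T \<inter> A" "insert u (A - T) = A - T" using uA uT by auto
        thus ?thesis using I Df hS hT False uT uA K0 by (simp add: A_def a_def b_def)
      qed
    qed
  qed
qed

lemma bias_v: assumes v: "v \<in> V"
  shows "\<bar>\<Sum>T\<in>D. sg T v * h v T\<bar>
     \<le> real (card (Nb v \<inter> part_of P v)) * (K / real (dg v)) * (NN * (real p * real q) / (real r * (real (card (part_of P v)) - 1)))"
proof -
  define \<pi> where "\<pi> = part_of P v"
  define m where "m = real (card \<pi>)"
  define Y where "Y = K / real (dg v) * (NN * (real p * real q) * m / (real r * (m - 1)))"
  have pi: "\<pi> \<in> P" "v \<in> \<pi>" using part_of_mem[OF v] by (auto simp: \<pi>_def)
  have finpi: "finite \<pi>" using part_fin pi by simp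
  have m1: "m - 1 > 0" using card_part_ge[OF pi(1)] r_ge2 unfolding m_def by linarith
  have cm: "real (card (\<pi> - {v})) = m - 1" using pi finpi m1 unfolding m_def
    by (simp add: of_nat_diff card_gt_0_iff Suc_le_eq)
  have e1: "(\<Sum>T\<in>D. sg T v * h v T) = (\<Sum>T\<in>D. sg T u * h v (sw v u T))" if u: "u \<in> \<pi> - {v}" for u
  proof -
    have "(\<Sum>T\<in>D. sg T v * h v T) = (\<Sum>T\<in>D. sg (sw v u T) v * h v (sw v u T))"
      using sum_swap[OF pi(1) pi(2), of u] u by blast
    thus ?thesis by (simp add: sgn_sw)
  qed
  have e2: "(\<Sum>u\<in>\<pi> - {v}. \<Sum>T\<in>D. sg T u * h v T) = - (\<Sum>T\<in>D. sg T v * h v T)"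
  proof -
    have "(\<Sum>u\<in>\<pi> - {v}. \<Sum>T\<in>D. sg T u * h v T) = (\<Sum>T\<in>D. h v T * (\<Sum>u\<in>\<pi> - {v}. sg T u))"
      by (subst sum.swap) (simp add: sum_distrib_left mult.commute)
    also have "\<dots> = (\<Sum>T\<in>D. h v T * (- sg T v))"
    proof (rule sum.cong[OF refl])
      fix T assume T: "T \<in> D"
      have "(\<Sum>u\<in>\<pi> - {v}. sg T u) = (\<Sum>u\<in>\<pi>. sg T u) - sg T v" using finpi pi by (simp add: sum_diff1)
      thus "h v T * (\<Sum>u\<in>\<pi> - {v}. sg T u) = h v T * (- sg T v)" using sg_part_sum[OF T pi(1)] by simp
    qed
    finally show ?thesis by (simp add: sum_negf mult.commute)
  qed
  have key: "m * (\<Sum>T\<in>D. sg T v * h v T) = (\<Sum>u\<in>\<pi> - {v}. \<Sum>T\<in>D. sg T u * (h v (sw v u T) - h v T))"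
  proof -
    have "(\<Sum>u\<in>\<pi> - {v}. \<Sum>T\<in>D. sg T u * (h v (sw v u T) - h v T))
        = (\<Sum>u\<in>\<pi> - {v}. \<Sum>T\<in>D. sg T u * h v (sw v u T)) - (\<Sum>u\<in>\<pi> - {v}. \<Sum>T\<in>D. sg T u * h v T)"
      by (simp add: right_diff_distrib sum_subtractf)
    also have "(\<Sum>u\<in>\<pi> - {v}. \<Sum>T\<in>D. sg T u * h v (sw v u T)) = (\<Sum>u\<in>\<pi> - {v}. \<Sum>T\<in>D. sg T v * h v T)"
      using e1 by simp
    also have "\<dots> = (m - 1) * (\<Sum>T\<in>D. sg T v * h v T)" using cm by simp
    finally show ?thesis using e2 by (simp add: algebra_simps)
  qed
  have bnd: "\<bar>\<Sum>T\<in>D. sg T u * (h v (sw v u T) - h v T)\<bar> \<le> (if u \<in> Nb v then Y else 0)"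
    if u: "u \<in> \<pi> - {v}" for u
  proof -
    have "\<bar>\<Sum>T\<in>D. sg T u * (h v (sw v u T) - h v T)\<bar> \<le> (\<Sum>T\<in>D. \<bar>sg T u * (h v (sw v u T) - h v T)\<bar>)"
      by (rule sum_abs)
    also have "\<dots> \<le> (\<Sum>T\<in>D. (if u \<in> Nb v then K / real (dg v) * (real q * (if u \<in> T \<and> v \<notin> T then 1 else 0) + real p * (if v \<in> T \<and> u \<notin> T then 1 else 0)) else 0))"
      by (rule sum_mono) (rule h_swap[OF v], use u \<pi>_def in auto)
    also have "\<dots> = (if u \<in> Nb v then K / real (dg v) * (\<Sum>T\<in>D. real q * (if u \<in> T \<and> v \<notin> T then 1 else 0) + real p * (if v \<in> T \<and> u \<notin> T then 1 else 0)) else 0)"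
      by (cases "u \<in> Nb v") (simp_all only: if_True if_False sum_distrib_left sum.neutral_const)
    also have "\<dots> = (if u \<in> Nb v then Y else 0)"
      using ind_sum[OF pi(1), of u v] u pi by (simp add: Y_def m_def)
    finally show ?thesis .
  qed
  have "m * \<bar>\<Sum>T\<in>D. sg T v * h v T\<bar> \<le> (\<Sum>u\<in>\<pi> - {v}. if u \<in> Nb v then Y else 0)"
  proof -
    have "m * \<bar>\<Sum>T\<in>D. sg T v * h v T\<bar> = \<bar>\<Sum>u\<in>\<pi> - {v}. \<Sum>T\<in>D. sg T u * (h v (sw v u T) - h v T)\<bar>"
    proof -
      have "m * \<bar>\<Sum>T\<in>D. sg T v * h v T\<bar> = \<bar>m * (\<Sum>T\<in>D. sg T v * h v T)\<bar>" using m1 by (simp add: abs_mult)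
      thus ?thesis by (simp only: key)
    qed
    also have "\<dots> \<le> (\<Sum>u\<in>\<pi> - {v}. \<bar>\<Sum>T\<in>D. sg T u * (h v (sw v u T) - h v T)\<bar>)" by (rule sum_abs)
    also have "\<dots> \<le> (\<Sum>u\<in>\<pi> - {v}. if u \<in> Nb v then Y else 0)" by (rule sum_mono) (rule bnd)
    finally show ?thesis .
  qed
  also have "(\<Sum>u\<in>\<pi> - {v}. if u \<in> Nb v then Y else 0) = real (card (Nb v \<inter> \<pi>)) * Y"
  proof -
    have "(\<Sum>u\<in>\<pi> - {v}. if u \<in> Nb v then Y else 0) = real (card ((\<pi> - {v}) \<inter> Nb v)) * Y"
      using finpi by (simp add: sum.inter_restrict[symmetric])
    moreover have "(\<pi> - {v}) \<inter> Nb v = Nb v \<inter> \<pi>" using Nb_self[of v] by auto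
    ultimately show ?thesis by simp
  qed
  finally have "m * \<bar>\<Sum>T\<in>D. sg T v * h v T\<bar> \<le> real (card (Nb v \<inter> \<pi>)) * Y" .
  hence "\<bar>\<Sum>T\<in>D. sg T v * h v T\<bar> \<le> real (card (Nb v \<inter> \<pi>)) * Y / m"
    using m1 by (simp add: field_simps)
  also have "\<dots> = real (card (Nb v \<inter> \<pi>)) * (K / real (dg v)) * (NN * (real p * real q) / (real r * (m - 1)))"
  proof -
    have m0: "m \<noteq> 0" "m - 1 \<noteq> 0" using m1 by auto
    show ?thesis unfolding Y_def using m0 by (simp add: divide_simps)
  qed
  finally show ?thesis by (simp add: \<pi>_def m_def)
qed

lemma delta_bound: assumes v: "v \<in> V" and T: "T \<in> D"
  shows "\<bar>h v T - cc (part_of P v)\<bar> \<le> K / (real r * real (dg v)) * \<bar>\<Sum>u\<in>Nb v. sg T u\<bar>"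
proof -
  define a where "a = card (T \<inter> Nb v)"
  define b where "b = card (Nb v - T)"
  have pv: "part_of P v \<in> P" "v \<in> part_of P v" using part_of_mem[OF v] by auto
  have ab: "a + b = dg v" unfolding a_def b_def deg_def using card_split[OF Nb_fin] .
  have B: "(a, b) \<in> Bset V E (part_of P v)" using ab pv by (auto simp: Bset_def)
  have d0: "real (dg v) > 0" using dg_pos[OF v] by simp
  have rp: "real r > 0" using r_ge2 by simp
  have S: "(\<Sum>u\<in>Nb v. sg T u) = real r * real a - real p * real (dg v)"
    using sum_sg_card[OF Nb_fin, of T v] by (simp add: a_def deg_def)
  have "real a / real (a + b) - real p / real r = (\<Sum>u\<in>Nb v. sg T u) / (real r * real (dg v))"
    unfolding S ab using d0 rp by (simp add: field_simps)
  hence "\<bar>h v T - cc (part_of P v)\<bar> \<le> K * \<bar>(\<Sum>u\<in>Nb v. sg T u) / (real r * real (dg v))\<bar>"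
    using cc_prop[OF pv(1) B] by (simp add: h_def a_def b_def)
  also have "\<dots> = K / (real r * real (dg v)) * \<bar>\<Sum>u\<in>Nb v. sg T u\<bar>"
    using d0 rp by (simp add: abs_divide)
  finally show ?thesis .
qed

lemma L2_v: assumes v: "v \<in> V"
  shows "L2_set (\<lambda>T. sg T v * (h v T - cc (part_of P v))) D
    \<le> sqrt NN * (4 * K * (real p * real q) / (real r * sqrt (real (dg v)))
       + K * (real r - 1) * real (card (Nb v \<inter> part_of P v)) / ((real (card (part_of P v)) - 1) * real (dg v)))"
proof -
  define d where "d = real (dg v)"
  define k where "k = real (card (Nb v \<inter> part_of P v))"
  define m where "m = real (card (part_of P v))"
  define x where "x = k / (m - 1)"
  define C where "C = K / (real r * d)"
  have pv: "part_of P v \<in> P" "v \<in> part_of P v" using part_of_mem[OF v] by auto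
  have d1: "d \<ge> 1" using dg_pos[OF v] by (simp add: d_def)
  have m1: "m - 1 > 0" using card_part_ge[OF pv(1)] r_ge2 unfolding m_def by linarith
  have x0: "x \<ge> 0" unfolding x_def k_def using m1 by simp
  have rp: "real r > 0" using r_ge2 by simp
  have C0: "C \<ge> 0" unfolding C_def using K_pos rp d1 by simp
  have sq: "(sg T v * (h v T - cc (part_of P v)))\<^sup>2 \<le> C\<^sup>2 * ((sg T v)\<^sup>2 * (\<Sum>u\<in>Nb v. sg T u)\<^sup>2)"
    if T: "T \<in> D" for T
  proof -
    have "\<bar>sg T v * (h v T - cc (part_of P v))\<bar> = \<bar>sg T v\<bar> * \<bar>h v T - cc (part_of P v)\<bar>" by (rule abs_mult)
    also have "\<dots> \<le> \<bar>sg T v\<bar> * (C * \<bar>\<Sum>u\<in>Nb v. sg T u\<bar>)"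
      using delta_bound[OF v T] by (intro mult_left_mono) (auto simp: C_def d_def)
    also have "\<dots> = \<bar>C * (sg T v * (\<Sum>u\<in>Nb v. sg T u))\<bar>" using C0 by (simp add: abs_mult)
    finally have "(sg T v * (h v T - cc (part_of P v)))\<^sup>2 \<le> (C * (sg T v * (\<Sum>u\<in>Nb v. sg T u)))\<^sup>2"
      by (simp add: abs_le_square_iff)
    thus ?thesis by (simp add: power_mult_distrib)
  qed
  have "L2_set (\<lambda>T. sg T v * (h v T - cc (part_of P v))) D
      \<le> sqrt (\<Sum>T\<in>D. C\<^sup>2 * ((sg T v)\<^sup>2 * (\<Sum>u\<in>Nb v. sg T u)\<^sup>2))"
    unfolding L2_set_def by (intro real_sqrt_le_mono sum_mono sq)
  also have "\<dots> = C * sqrt (\<Sum>T\<in>D. (sg T v)\<^sup>2 * (\<Sum>u\<in>Nb v. sg T u)\<^sup>2)"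
    using C0 by (simp add: sum_distrib_left[symmetric] real_sqrt_mult)
  also have "\<dots> \<le> C * sqrt (NN * ((real p * real q)\<^sup>2 * d + x * ((real q - real p)\<^sup>2 * real p * real q)))"
  proof (intro mult_left_mono real_sqrt_le_mono C0)
    have "(\<Sum>T\<in>D. (sg T v)\<^sup>2 * (\<Sum>u\<in>Nb v. sg T u)\<^sup>2)
     \<le> (real p * real q)\<^sup>2 * real (card (Nb v)) * NN
       + real (card (Nb v \<inter> part_of P v)) * ((real q - real p)\<^sup>2 * real p * real q * NN / (real (card (part_of P v)) - 1))"
      using var_v[OF Nb_sub v Nb_self] .
    also have "\<dots> = NN * ((real p * real q)\<^sup>2 * d + x * ((real q - real p)\<^sup>2 * real p * real q))"
      by (simp add: d_def deg_def x_def k_def m_def algebra_simps)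
    finally show "(\<Sum>T\<in>D. (sg T v)\<^sup>2 * (\<Sum>u\<in>Nb v. sg T u)\<^sup>2) \<le> NN * ((real p * real q)\<^sup>2 * d + x * ((real q - real p)\<^sup>2 * real p * real q))" .
  qed
  also have "\<dots> = C * sqrt NN * sqrt ((real p * real q)\<^sup>2 * d + x * ((real q - real p)\<^sup>2 * real p * real q))"
    by (simp add: real_sqrt_mult)
  also have "\<dots> \<le> C * sqrt NN * (4 * (real p * real q) * sqrt d + (real p + real q) * (real p + real q - 1) * x)"
    using alg[of "real p" "real q" d x] p_pos q_pos d1 x0 C0
    by (intro mult_left_mono) auto
  also have "\<dots> = sqrt NN * (4 * K * (real p * real q) / (real r * sqrt d) + K * (real r - 1) * k / ((m - 1) * d))"
  proof -
    have sd: "sqrt d > 0" "sqrt d * sqrt d = d" using d1 by auto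
    have f1: "C * (4 * (real p * real q) * sqrt d) = 4 * K * (real p * real q) / (real r * sqrt d)"
    proof -
      have "C * (4 * (real p * real q) * sqrt d) = K * (4 * (real p * real q)) * (sqrt d / (real r * (sqrt d * sqrt d)))"
        unfolding C_def sd(2) by simp
      also have "sqrt d / (real r * (sqrt d * sqrt d)) = 1 / (real r * sqrt d)"
      proof -
        have g: "\<And>y::real. y > 0 \<Longrightarrow> y / (real r * (y * y)) = 1 / (real r * y)" by (simp add: field_simps)
        show ?thesis by (rule g[OF sd(1)])
      qed
      finally show ?thesis by simp
    qed
    have f2: "C * ((real p + real q) * (real p + real q - 1) * x) = K * (real r - 1) * k / ((m - 1) * d)"
      unfolding C_def x_def r_def using rp m1 d1 r_def by (simp add: divide_simps)
    have "C * sqrt NN * (4 * (real p * real q) * sqrt d + (real p + real q) * (real p + real q - 1) * x)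
       = sqrt NN * (C * (4 * (real p * real q) * sqrt d) + C * ((real p + real q) * (real p + real q - 1) * x))"
      by (simp only: algebra_simps)
    thus ?thesis by (simp only: f1 f2)
  qed
  finally show ?thesis by (simp add: d_def k_def m_def)
qed

definition "est = neyman V E P n p q x t f"
definition "tbar = (\<Sum>v\<in>V. t v) / real (r * n)"
definition "eps v = x v - avg_on (part_of P v) x + (real q / real r) * (t v - avg_on (part_of P v) t)"
definition "cst = 1 / (real p * real q * real n)"
definition "LL T = cst * (\<Sum>v\<in>V. sg T v * eps v)"
definition "II T = cst * (\<Sum>v\<in>V. sg T v * (h v T - cc (part_of P v)))"

lemma cst_pos: "cst > 0" using p_pos q_pos n_pos by (simp add: cst_def)

lemma eps_sum: assumes pi: "\<pi> \<in> P" shows "(\<Sum>v\<in>\<pi>. eps v) = 0"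
proof -
  have m: "real (card \<pi>) > 0" using part_fin[OF pi] part_ne[OF pi] by (simp add: card_gt_0_iff)
  have "(\<Sum>v\<in>\<pi>. eps v) = (\<Sum>v\<in>\<pi>. x v - avg_on \<pi> x + (real q / real r) * (t v - avg_on \<pi> t))"
    by (rule sum.cong) (simp_all add: eps_def part_of_eq[OF pi])
  also have "\<dots> = (\<Sum>v\<in>\<pi>. x v) - real (card \<pi>) * avg_on \<pi> x + (real q / real r) * ((\<Sum>v\<in>\<pi>. t v) - real (card \<pi>) * avg_on \<pi> t)"
  proof -
    have "(\<Sum>v\<in>\<pi>. x v - avg_on \<pi> x + (real q / real r) * (t v - avg_on \<pi> t))
       = (\<Sum>v\<in>\<pi>. x v - avg_on \<pi> x) + (\<Sum>v\<in>\<pi>. (real q / real r) * (t v - avg_on \<pi> t))"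
      by (rule sum.distrib)
    also have "(\<Sum>v\<in>\<pi>. (real q / real r) * (t v - avg_on \<pi> t)) = (real q / real r) * (\<Sum>v\<in>\<pi>. t v - avg_on \<pi> t)"
      by (rule sum_distrib_left[symmetric])
    finally show ?thesis by (simp add: sum_subtractf)
  qed
  also have "\<dots> = 0" using m by (simp add: avg_on_def)
  finally show ?thesis .
qed

lemma decomp: assumes T: "T \<in> D" shows "est T - tbar = LL T + II T"
proof -
  define G where "G \<pi> = avg_on \<pi> x + (real q / real r) * avg_on \<pi> t + cc \<pi>" for \<pi>
  have rp: "real r > 0" using r_ge2 by simp
  have pw: "sg T v * outcome V E P x t f T v = sg T v * eps v + sg T v * G (part_of P v)
      + (real p * real q / real r) * t v + sg T v * (h v T - cc (part_of P v))" for v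
  proof -
    have "sg T v * (x v + (if v \<in> T then t v else 0)) = sg T v * (x v + (real q / real r) * t v) + (real p * real q / real r) * t v"
    proof (cases "v \<in> T")
      case True
      have e: "real q * real q / real r + real p * real q / real r = real q"
        using rp r_def by (simp add: add_divide_distrib[symmetric] field_simps)
      have "sg T v * (x v + (if v \<in> T then t v else 0)) = real q * x v + real q * t v"
        using True by (simp add: sgn_T_def algebra_simps)
      also have "\<dots> = real q * x v + (real q * real q / real r + real p * real q / real r) * t v" using e by simp
      also have "\<dots> = real q * (x v + real q / real r * t v) + real p * real q / real r * t v" by (simp add: algebra_simps)
      also have "\<dots> = sg T v * (x v + (real q / real r) * t v) + (real p * real q / real r) * t v"
        using True by (simp add: sgn_T_def)
      finally show ?thesis .
    next
      case False
      thus ?thesis by (simp add: sgn_T_def algebra_simps)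
    qed
    note A = this
    have B: "x v + (real q / real r) * t v = eps v + avg_on (part_of P v) x + (real q / real r) * avg_on (part_of P v) t"
      by (simp add: eps_def algebra_simps)
    have "sg T v * outcome V E P x t f T v = sg T v * (x v + (if v \<in> T then t v else 0)) + sg T v * h v T"
      by (simp add: outcome_def h_def algebra_simps)
    also have "\<dots> = sg T v * (eps v + avg_on (part_of P v) x + (real q / real r) * avg_on (part_of P v) t)
        + (real p * real q / real r) * t v + sg T v * h v T"
      by (simp only: A B)
    also have "\<dots> = sg T v * eps v + sg T v * G (part_of P v)
      + (real p * real q / real r) * t v + sg T v * (h v T - cc (part_of P v))"
      by (simp add: G_def algebra_simps)
    finally show ?thesis .
  qed
  have "(\<Sum>v\<in>V. sg T v * outcome V E P x t f T v)
      = (\<Sum>v\<in>V. sg T v * eps v) + (\<Sum>v\<in>V. sg T v * G (part_of P v))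
        + (real p * real q / real r) * (\<Sum>v\<in>V. t v) + (\<Sum>v\<in>V. sg T v * (h v T - cc (part_of P v)))"
    by (simp add: pw sum.distrib sum_distrib_left)
  also have "(\<Sum>v\<in>V. sg T v * G (part_of P v)) = 0" by (rule sum_part_zero[OF T])
  finally have S: "(\<Sum>v\<in>V. sg T v * outcome V E P x t f T v)
      = (\<Sum>v\<in>V. sg T v * eps v) + (real p * real q / real r) * (\<Sum>v\<in>V. t v) + (\<Sum>v\<in>V. sg T v * (h v T - cc (part_of P v)))"
    by simp
  have tb: "cst * ((real p * real q / real r) * (\<Sum>v\<in>V. t v)) = tbar"
    using p_pos q_pos n_pos rp by (simp add: cst_def tbar_def field_simps)
  have "est T = cst * (\<Sum>v\<in>V. sg T v * outcome V E P x t f T v)"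
    by (simp add: est_def neyman_def cst_def)
  also have "\<dots> = LL T + tbar + II T" unfolding S LL_def II_def tb[symmetric] by (simp add: algebra_simps)
  finally show ?thesis by simp
qed

lemma sum_inv_parts: "(\<Sum>v\<in>V. 1 / (real (card (part_of P v)) - 1)) \<le> 2 * real (card P)"
proof -
  have "(\<Sum>v\<in>V. 1 / (real (card (part_of P v)) - 1)) = (\<Sum>\<pi>\<in>P. \<Sum>v\<in>\<pi>. 1 / (real (card (part_of P v)) - 1))"
    using sum.partition[OF finV part] .
  also have "\<dots> = (\<Sum>\<pi>\<in>P. real (card \<pi>) / (real (card \<pi>) - 1))"
    by (rule sum.cong[OF refl]) (simp add: part_of_eq)
  also have "\<dots> \<le> (\<Sum>\<pi>\<in>P. 2)"
  proof (rule sum_mono)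
    fix \<pi> assume pi: "\<pi> \<in> P"
    have "real (card \<pi>) \<ge> 2" using card_part_ge[OF pi] r_ge2 by linarith
    thus "real (card \<pi>) / (real (card \<pi>) - 1) \<le> 2" by (simp add: divide_simps)
  qed
  finally show ?thesis by simp
qed

lemma bias: "\<bar>E_T V P p r est - tbar\<bar> \<le> K * real (card P) / real n"
proof -
  have rp: "real r \<ge> 2" using r_ge2 by simp
  have "E_T V P p r est - tbar = (\<Sum>T\<in>D. est T - tbar) / NN"
    using NN_pos by (simp add: E_T_def sum_subtractf field_simps)
  also have "(\<Sum>T\<in>D. est T - tbar) = (\<Sum>T\<in>D. LL T) + (\<Sum>T\<in>D. II T)"
    by (simp add: decomp sum.distrib)
  also have "(\<Sum>T\<in>D. LL T) = 0"
  proof -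
    have "(\<Sum>T\<in>D. LL T) = cst * (\<Sum>v\<in>V. eps v * (\<Sum>T\<in>D. sg T v))"
    proof -
      have "(\<Sum>T\<in>D. LL T) = cst * (\<Sum>T\<in>D. \<Sum>v\<in>V. sg T v * eps v)"
        unfolding LL_def by (simp only: sum_distrib_left[symmetric])
      also have "(\<Sum>T\<in>D. \<Sum>v\<in>V. sg T v * eps v) = (\<Sum>v\<in>V. \<Sum>T\<in>D. sg T v * eps v)" by (rule sum.swap)
      also have "\<dots> = (\<Sum>v\<in>V. eps v * (\<Sum>T\<in>D. sg T v))"
        by (simp only: sum_distrib_left mult.commute)
      finally show ?thesis .
    qed
    also have "\<dots> = 0" using M1 by simp
    finally show ?thesis .
  qed
  also have "(\<Sum>T\<in>D. II T) = cst * (\<Sum>v\<in>V. \<Sum>T\<in>D. sg T v * h v T)"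
  proof -
    have "(\<Sum>T\<in>D. II T) = cst * (\<Sum>v\<in>V. \<Sum>T\<in>D. sg T v * (h v T - cc (part_of P v)))"
      unfolding II_def by (simp only: sum_distrib_left[symmetric]) (simp only: sum.swap[of _ D])
    also have "(\<Sum>v\<in>V. \<Sum>T\<in>D. sg T v * (h v T - cc (part_of P v))) = (\<Sum>v\<in>V. \<Sum>T\<in>D. sg T v * h v T)"
    proof (rule sum.cong[OF refl])
      fix v assume v: "v \<in> V"
      have "(\<Sum>T\<in>D. sg T v * (h v T - cc (part_of P v))) = (\<Sum>T\<in>D. sg T v * h v T) - cc (part_of P v) * (\<Sum>T\<in>D. sg T v)"
        by (simp add: right_diff_distrib sum_subtractf sum_distrib_left mult.commute)
      thus "(\<Sum>T\<in>D. sg T v * (h v T - cc (part_of P v))) = (\<Sum>T\<in>D. sg T v * h v T)" using M1[OF v] by simp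
    qed
    finally show ?thesis .
  qed
  finally have eq: "E_T V P p r est - tbar = cst * (\<Sum>v\<in>V. \<Sum>T\<in>D. sg T v * h v T) / NN" by simp
  have "\<bar>\<Sum>v\<in>V. \<Sum>T\<in>D. sg T v * h v T\<bar> \<le> (\<Sum>v\<in>V. K * (NN * (real p * real q) / real r) * (1 / (real (card (part_of P v)) - 1)))"
  proof -
    have "\<bar>\<Sum>v\<in>V. \<Sum>T\<in>D. sg T v * h v T\<bar> \<le> (\<Sum>v\<in>V. \<bar>\<Sum>T\<in>D. sg T v * h v T\<bar>)" by (rule sum_abs)
    also have "\<dots> \<le> (\<Sum>v\<in>V. K * (NN * (real p * real q) / real r) * (1 / (real (card (part_of P v)) - 1)))"
    proof (rule sum_mono)
      fix v assume v: "v \<in> V"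
      have pv: "part_of P v \<in> P" using part_of_mem[OF v] by auto
      have m1: "real (card (part_of P v)) - 1 > 0" using card_part_ge[OF pv] r_ge2 by linarith
      have d0: "real (dg v) > 0" using dg_pos[OF v] by simp
      have kd: "real (card (Nb v \<inter> part_of P v)) \<le> real (dg v)"
        unfolding deg_def using Nb_fin by (simp add: card_mono)
      have "\<bar>\<Sum>T\<in>D. sg T v * h v T\<bar> \<le> real (card (Nb v \<inter> part_of P v)) * (K / real (dg v)) * (NN * (real p * real q) / (real r * (real (card (part_of P v)) - 1)))"
        by (rule bias_v[OF v])
      also have "\<dots> \<le> real (dg v) * (K / real (dg v)) * (NN * (real p * real q) / (real r * (real (card (part_of P v)) - 1)))"
        using kd K_pos m1 d0 NN_pos r_ge2 by (intro mult_right_mono) auto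
      also have "\<dots> = K * (NN * (real p * real q) / real r) * (1 / (real (card (part_of P v)) - 1))"
        using d0 by simp
      finally show "\<bar>\<Sum>T\<in>D. sg T v * h v T\<bar> \<le> K * (NN * (real p * real q) / real r) * (1 / (real (card (part_of P v)) - 1))" .
    qed
    finally show ?thesis .
  qed
  also have "\<dots> = K * (NN * (real p * real q) / real r) * (\<Sum>v\<in>V. 1 / (real (card (part_of P v)) - 1))"
    by (simp add: sum_distrib_left)
  also have "\<dots> \<le> K * (NN * (real p * real q) / real r) * (2 * real (card P))"
    using sum_inv_parts K_pos NN_pos p_pos q_pos r_ge2 by (intro mult_left_mono) auto
  finally have A: "\<bar>\<Sum>v\<in>V. \<Sum>T\<in>D. sg T v * h v T\<bar> \<le> K * (NN * (real p * real q) / real r) * (2 * real (card P))" .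
  have "\<bar>E_T V P p r est - tbar\<bar> = cst / NN * \<bar>\<Sum>v\<in>V. \<Sum>T\<in>D. sg T v * h v T\<bar>"
    unfolding eq using cst_pos NN_pos by (simp add: abs_mult abs_divide)
  also have "\<dots> \<le> cst / NN * (K * (NN * (real p * real q) / real r) * (2 * real (card P)))"
    using A cst_pos NN_pos by (intro mult_left_mono) auto
  also have "\<dots> = K * real (card P) / real n * (2 / real r)"
    using NN_pos p_pos q_pos n_pos r_ge2 by (simp add: cst_def field_simps)
  also have "\<dots> \<le> K * real (card P) / real n * 1"
    using rp K_pos n_pos by (intro mult_left_mono) auto
  finally show ?thesis by simp
qed

lemma var_main:
  "sqrt (E_T V P p r (\<lambda>T. (est T - tbar)\<^sup>2))
     \<le> (1 / real (r * n)) * (\<Sum>v\<in>V. 4 * K / sqrt (real (dg v)))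
       + (K / (real p * real q * real n)) *
           (\<Sum>v\<in>V. (real r - 1) * real (card (part_of P v \<inter> Nb v))
                     / ((real (card (part_of P v)) - 1) * real (dg v)))
       + sqrt ((\<Sum>v\<in>V. (eps v)\<^sup>2) / real (r * n)) * sqrt (2 * real r) / sqrt (real p * real q * real n)"
proof -
  define B where "B v = 4 * K * (real p * real q) / (real r * sqrt (real (dg v)))
       + K * (real r - 1) * real (card (Nb v \<inter> part_of P v)) / ((real (card (part_of P v)) - 1) * real (dg v))" for v
  define S where "S = (\<Sum>v\<in>V. (eps v)\<^sup>2)"
  have sN: "sqrt NN > 0" using NN_pos by simp
  have c0: "cst \<ge> 0" using cst_pos by simp
  have "E_T V P p r (\<lambda>T. (est T - tbar)\<^sup>2) = (\<Sum>T\<in>D. (LL T + II T)\<^sup>2) / NN"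
    unfolding E_T_def by (simp add: decomp)
  hence "sqrt (E_T V P p r (\<lambda>T. (est T - tbar)\<^sup>2)) = L2_set (\<lambda>T. LL T + II T) D / sqrt NN"
    by (simp add: L2_set_def real_sqrt_divide)
  also have "\<dots> \<le> (L2_set LL D + L2_set II D) / sqrt NN"
    using sN by (intro divide_right_mono L2_set_triangle_ineq) auto
  also have "L2_set II D \<le> cst * (\<Sum>v\<in>V. sqrt NN * B v)"
  proof -
    have "L2_set II D = cst * L2_set (\<lambda>T. \<Sum>v\<in>V. sg T v * (h v T - cc (part_of P v))) D"
      unfolding II_def by (rule L2_set_right_distrib[OF c0, symmetric])
    also have "\<dots> \<le> cst * (\<Sum>v\<in>V. L2_set (\<lambda>T. sg T v * (h v T - cc (part_of P v))) D)"
      using L2_sum[OF finV] c0 by (intro mult_left_mono) auto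
    also have "\<dots> \<le> cst * (\<Sum>v\<in>V. sqrt NN * B v)"
      using L2_v c0 unfolding B_def by (intro mult_left_mono sum_mono) auto
    finally show ?thesis .
  qed
  also have "L2_set LL D \<le> cst * sqrt (2 * (real p * real q * NN) * S)"
  proof -
    have "L2_set LL D = cst * L2_set (\<lambda>T. \<Sum>v\<in>V. sg T v * eps v) D"
      unfolding LL_def by (rule L2_set_right_distrib[OF c0, symmetric])
    also have "\<dots> \<le> cst * sqrt (2 * (real p * real q * NN) * S)"
      unfolding L2_set_def S_def using varL[OF eps_sum] c0 by (intro mult_left_mono real_sqrt_le_mono) auto
    finally show ?thesis .
  qed
  finally have main: "sqrt (E_T V P p r (\<lambda>T. (est T - tbar)\<^sup>2))
      \<le> (cst * sqrt (2 * (real p * real q * NN) * S) + cst * (\<Sum>v\<in>V. sqrt NN * B v)) / sqrt NN"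
    using sN by (simp add: divide_right_mono add_mono)
  also have "\<dots> = cst * sqrt (2 * (real p * real q) * S) + cst * (\<Sum>v\<in>V. B v)"
    using sN NN_pos by (simp add: real_sqrt_mult sum_distrib_left[symmetric] add_divide_distrib)
  also have "cst * (\<Sum>v\<in>V. B v) = (1 / real (r * n)) * (\<Sum>v\<in>V. 4 * K / sqrt (real (dg v)))
       + (K / (real p * real q * real n)) *
           (\<Sum>v\<in>V. (real r - 1) * real (card (part_of P v \<inter> Nb v))
                     / ((real (card (part_of P v)) - 1) * real (dg v)))"
  proof -
    have "cst * B v = (1 / real (r * n)) * (4 * K / sqrt (real (dg v))) + (K / (real p * real q * real n)) *
        ((real r - 1) * real (card (part_of P v \<inter> Nb v)) / ((real (card (part_of P v)) - 1) * real (dg v)))"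
      if v: "v \<in> V" for v
    proof -
      have pv: "part_of P v \<in> P" using part_of_mem[OF v] by auto
      have m1: "real (card (part_of P v)) - 1 \<noteq> 0" using card_part_ge[OF pv] r_ge2 by linarith
      have d0: "real (dg v) \<noteq> 0" "sqrt (real (dg v)) \<noteq> 0" using dg_pos[OF v] by auto
      show ?thesis unfolding B_def cst_def using p_pos q_pos n_pos r_ge2 m1 d0 by (simp add: field_simps Int_commute)
    qed
    hence "cst * (\<Sum>v\<in>V. B v) = (\<Sum>v\<in>V. (1 / real (r * n)) * (4 * K / sqrt (real (dg v))) + (K / (real p * real q * real n)) *
        ((real r - 1) * real (card (part_of P v \<inter> Nb v)) / ((real (card (part_of P v)) - 1) * real (dg v))))"
      by (simp add: sum_distrib_left)
    thus ?thesis by (simp add: sum_distrib_left sum.distrib)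
  qed
  also have "cst * sqrt (2 * (real p * real q) * S) = sqrt (S / real (r * n)) * sqrt (2 * real r) / sqrt (real p * real q * real n)"
  proof (rule power2_eq_imp_eq)
    have S0: "S \<ge> 0" unfolding S_def by (simp add: sum_nonneg)
    show "(cst * sqrt (2 * (real p * real q) * S))\<^sup>2 = (sqrt (S / real (r * n)) * sqrt (2 * real r) / sqrt (real p * real q * real n))\<^sup>2"
      using S0 p_pos q_pos n_pos r_ge2 by (simp add: cst_def power_mult_distrib power_divide field_simps power2_eq_square)
    show "0 \<le> cst * sqrt (2 * (real p * real q) * S)" using c0 S0 by simp
    show "0 \<le> sqrt (S / real (r * n)) * sqrt (2 * real r) / sqrt (real p * real q * real n)" using S0 by simp
  qed
  finally show ?thesis by (simp add: S_def algebra_simps)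
qed

end


theorem mainTheorem5:
  fixes V :: "'a set" and E :: "'a \<Rightarrow> 'a \<Rightarrow> bool" and P :: "'a set set"
    and n p q r :: nat and x t :: "'a \<Rightarrow> real" and f :: "'a set \<Rightarrow> nat \<Rightarrow> nat \<Rightarrow> real"
    and K :: real
  assumes n_pos: "n > 0" and p_pos: "p > 0" and q_pos: "q > 0" and r_def: "r = p + q"
    and graph: "simple_graph V E"
    and card_V: "card V = r * n"
    and no_isolated: "\<forall>v\<in>V. \<exists>u. E v u"
    and partition: "partition_on V P"
    and divisible: "\<forall>\<pi>\<in>P. r dvd card \<pi>"
    and f_empty: "\<forall>\<pi>\<in>P. \<forall>v\<in>\<pi>. f \<pi> 0 (deg V E v) = 0"
    and K_pos: "K > 0"
    and lipschitz: "\<forall>\<pi>\<in>P. \<forall>a b c d. (a, b) \<in> Bset V E \<pi> \<longrightarrow> (c, d) \<in> Bset V E \<pi> \<longrightarrow>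
        \<bar>f \<pi> a b - f \<pi> c d\<bar> \<le> K * \<bar>real a / real (a + b) - real c / real (c + d)\<bar>"
  shows
    "let tbar = (\<Sum>v\<in>V. t v) / real (r * n);
         est = neyman V E P n p q x t f;
         eps = (\<lambda>v. x v - avg_on (part_of P v) x
                   + (real q / real r) * (t v - avg_on (part_of P v) t));
         \<sigma> = sqrt ((\<Sum>v\<in>V. (eps v)\<^sup>2) / real (r * n))
     in \<bar>E_T V P p r est - tbar\<bar> \<le> K * real (card P) / real n
      \<and> sqrt (E_T V P p r (\<lambda>T. (est T - tbar)\<^sup>2))
          \<le> (1 / real (r * n)) * (\<Sum>v\<in>V. 4 * K / sqrt (real (deg V E v)))
            + (K / (real p * real q * real n)) *
                (\<Sum>v\<in>V. (real r - 1) * real (card (part_of P v \<inter> nbhd V E v))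
                          / ((real (card (part_of P v)) - 1) * real (deg V E v)))
            + \<sigma> * sqrt (2 * real r) / sqrt (real p * real q * real n)"
proof -
  have finV: "finite V" using graph by (simp add: simple_graph_def)
  interpret setting V P p q r E n x t f K
    by unfold_locales (use assms finV in auto)
  show ?thesis
    unfolding Let_def
    using bias[unfolded est_def tbar_def] var_main[unfolded est_def tbar_def eps_def]
    by simp
qed

end
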